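(* Let $F=F(N,\mathcal D)$ be a fragile connected GSC. Then $\chi(\Gamma_k)\ge|\mathcal D|^{k-1}-1$ for all $k\ge2$.
   Context: GSC: $N\ge2$, $\mathcal D\subset\{0,\dots,N-1\}^2$ with $1<|\mathcal D|<N^2$, $\varphi_i(x)=\frac1N(x+i)$, $F$ the attractor $F=\bigcup_{i\in\mathcal D}\varphi_i(F)$; $\varphi_{i_1\cdots i_k}=\varphi_{i_1}\circ\cdots\circ\varphi_{i_k}$. $\Gamma_k$: vertex set $\mathcal D^k$, edge between distinct $\mathbf i,\mathbf j$ iff $\varphi_{\mathbf i}(F)\cap\varphi_{\mathbf j}(F)\ne\varnothing$. $\chi(G)$: max over cut vertices $v$ of the number of vertices of the second largest component of $G-\{v\}$ (0 if none). $F$ is fragile if there is a partition $\mathcal D=\mathcal D_1\cup\mathcal D_2$ into disjoint nonempty sets with $\big(\bigcup_{i\in\mathcal D_1}\varphi_i(F)\big)\cap\big(\bigcup_{i\in\mathcal D_2}\varphi_i(F)\big)$ a singleton. *)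

theory Defs
  imports "HOL-Analysis.Analysis"
begin

definition gsc_map :: "nat \<Rightarrow> nat \<times> nat \<Rightarrow> real \<times> real \<Rightarrow> real \<times> real" where
  "gsc_map N i x = ((fst x + real (fst i)) / real N, (snd x + real (snd i)) / real N)"

definition gsc_word_map :: "nat \<Rightarrow> (nat \<times> nat) list \<Rightarrow> real \<times> real \<Rightarrow> real \<times> real" where
  "gsc_word_map N w = foldr (\<lambda>i f. gsc_map N i \<circ> f) w id"

definition gsc_params :: "nat \<Rightarrow> (nat \<times> nat) set \<Rightarrow> bool" where
  "gsc_params N D \<longleftrightarrow> N \<ge> 2 \<and> D \<subseteq> {0..<N} \<times> {0..<N} \<and> 1 < card D \<and> card D < N^2"

definition gsc_attractor :: "nat \<Rightarrow> (nat \<times> nat) set \<Rightarrow> (real \<times> real) set \<Rightarrow> bool" where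
  "gsc_attractor N D F \<longleftrightarrow> compact F \<and> F \<noteq> {} \<and> F = (\<Union>i\<in>D. gsc_map N i ` F)"

definition fragile :: "nat \<Rightarrow> (nat \<times> nat) set \<Rightarrow> (real \<times> real) set \<Rightarrow> bool" where
  "fragile N D F \<longleftrightarrow> (\<exists>D1 D2. D1 \<union> D2 = D \<and> D1 \<inter> D2 = {} \<and> D1 \<noteq> {} \<and> D2 \<noteq> {} \<and>
      (\<exists>p. (\<Union>i\<in>D1. gsc_map N i ` F) \<inter> (\<Union>i\<in>D2. gsc_map N i ` F) = {p}))"

definition graph_reach :: "'a set \<Rightarrow> ('a \<Rightarrow> 'a \<Rightarrow> bool) \<Rightarrow> 'a \<Rightarrow> 'a \<Rightarrow> bool" where
  "graph_reach V E x y \<longleftrightarrow> x \<in> V \<and> y \<in> V \<and> (\<lambda>a b. a \<in> V \<and> b \<in> V \<and> E a b)\<^sup>*\<^sup>* x y"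

definition graph_components :: "'a set \<Rightarrow> ('a \<Rightarrow> 'a \<Rightarrow> bool) \<Rightarrow> 'a set set" where
  "graph_components V E = {{y. graph_reach V E x y} | x. x \<in> V}"

definition cut_vertex :: "'a set \<Rightarrow> ('a \<Rightarrow> 'a \<Rightarrow> bool) \<Rightarrow> 'a \<Rightarrow> bool" where
  "cut_vertex V E v \<longleftrightarrow> v \<in> V \<and> card (graph_components V E) < card (graph_components (V - {v}) E)"

text \<open>Number of vertices of the second largest component (0 if fewer than two components).\<close>
definition second_largest_comp :: "'a set \<Rightarrow> ('a \<Rightarrow> 'a \<Rightarrow> bool) \<Rightarrow> nat" where
  "second_largest_comp V E = Max ({0} \<union> {min (card C1) (card C2) | C1 C2.
      C1 \<in> graph_components V E \<and> C2 \<in> graph_components V E \<and> C1 \<noteq> C2})"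

definition chi :: "'a set \<Rightarrow> ('a \<Rightarrow> 'a \<Rightarrow> bool) \<Rightarrow> nat" where
  "chi V E = Max ({0} \<union> {second_largest_comp (V - {v}) E | v. cut_vertex V E v})"

definition Gamma_vertices :: "(nat \<times> nat) set \<Rightarrow> nat \<Rightarrow> (nat \<times> nat) list set" where
  "Gamma_vertices D k = {w. length w = k \<and> set w \<subseteq> D}"

definition Gamma_edge :: "nat \<Rightarrow> (real \<times> real) set \<Rightarrow> (nat \<times> nat) list \<Rightarrow> (nat \<times> nat) list \<Rightarrow> bool" where
  "Gamma_edge N F w u \<longleftrightarrow> w \<noteq> u \<and> gsc_word_map N w ` F \<inter> gsc_word_map N u ` F \<noteq> {}"

end

theory Submission
  imports Defs
begin

definition piece :: "nat \<Rightarrow> (real\<times>real) set \<Rightarrow> (nat\<times>nat) list \<Rightarrow> (real\<times>real) set" where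
  "piece N F w = gsc_word_map N w ` F"

fun wpos :: "nat \<Rightarrow> (nat\<times>nat) list \<Rightarrow> nat \<times> nat" where
  "wpos N [] = (0,0)"
| "wpos N (i#w) = (fst i * N ^ length w + fst (wpos N w), snd i * N ^ length w + snd (wpos N w))"

lemma word_map_Cons: "gsc_word_map N (i#w) = gsc_map N i \<circ> gsc_word_map N w"
  by (simp add: gsc_word_map_def)

lemma word_map_Nil: "gsc_word_map N [] = id" by (simp add: gsc_word_map_def)

lemma word_map_formula:
  assumes "N > 0"
  shows "gsc_word_map N w x = ((fst x + real (fst (wpos N w))) / real N ^ length w,
                              (snd x + real (snd (wpos N w))) / real N ^ length w)"
proof (induction w)
  case Nil thus ?case by (simp add: word_map_Nil)
next
  case (Cons i w)
  show ?case using assms by (simp add: word_map_Cons Cons gsc_map_def field_simps)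
qed


lemma box_aux:
  fixes g :: "real\<times>real \<Rightarrow> real"
  assumes cpt: "compact (g ` F)" and ne: "F \<noteq> {}" and N: "N \<ge> (2::nat)"
    and rec: "\<And>z. z \<in> F \<Longrightarrow> \<exists>y\<in>F. \<exists>c::nat. c \<le> N - 1 \<and> g z = (g y + real c) / real N"
  shows "\<And>z. z \<in> F \<Longrightarrow> 0 \<le> g z \<and> g z \<le> 1"
proof -
  have ne2: "g ` F \<noteq> {}" using ne by auto
  obtain s where s: "s \<in> g ` F" "\<And>t. t \<in> g ` F \<Longrightarrow> t \<le> s"
    using compact_attains_sup[OF cpt ne2] by blast
  obtain i where i: "i \<in> g ` F" "\<And>t. t \<in> g ` F \<Longrightarrow> i \<le> t"
    using compact_attains_inf[OF cpt ne2] by blast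
  have s1: "s \<le> 1"
  proof -
    obtain z where z: "z \<in> F" "s = g z" using s by auto
    obtain y c where yc: "y \<in> F" "c \<le> N - 1" "g z = (g y + real c)/real N" using rec[OF z(1)] by blast
    have gy: "g y \<le> s" using s yc by auto
    have c: "real c \<le> real N - 1" using yc N by linarith
    have Np: "real N > 0" using N by simp
    have "s * real N = g y + real c" using z yc Np by (simp add: field_simps)
    hence "s * real N \<le> s + (real N - 1)" using gy c by linarith
    hence "s * (real N - 1) \<le> 1 * (real N - 1)" by (simp add: algebra_simps)
    moreover have "real N - 1 > 0" using N by simp
    ultimately show ?thesis by (meson mult_le_cancel_right_pos)
  qed
  have i0: "0 \<le> i"
  proof -
    obtain z where z: "z \<in> F" "i = g z" using i by auto
    obtain y c where yc: "y \<in> F" "c \<le> N - 1" "g z = (g y + real c)/real N" using rec[OF z(1)] by blast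
    have gy: "i \<le> g y" using i yc by auto
    have Np: "real N > 0" using N by simp
    have "i * real N = g y + real c" using z yc Np by (simp add: field_simps)
    hence "i * real N \<ge> i * 1" using gy by simp
    hence "i * (real N - 1) \<ge> 0" by (simp add: algebra_simps)
    moreover have "real N - 1 > 0" using N by simp
    ultimately show ?thesis by (simp add: zero_le_mult_iff)
  qed
  fix z assume "z \<in> F"
  thus "0 \<le> g z \<and> g z \<le> 1" using s i s1 i0 by force
qed


lemma Gv_0: "Gamma_vertices D 0 = {[]}" by (auto simp: Gamma_vertices_def)

lemma Gv_Suc: "Gamma_vertices D (Suc m) = (\<lambda>(i,w). i#w) ` (D \<times> Gamma_vertices D m)"
  by (auto simp: Gamma_vertices_def length_Suc_conv image_iff)

lemma Gv_Cons[simp]: "(i#w \<in> Gamma_vertices D (Suc m)) \<longleftrightarrow> i \<in> D \<and> w \<in> Gamma_vertices D m"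
  by (auto simp: Gamma_vertices_def)

lemma Gv_finite: "finite D \<Longrightarrow> finite (Gamma_vertices D m)"
proof -
  assume f: "finite D"
  have "Gamma_vertices D m = {xs. set xs \<subseteq> D \<and> length xs = m}" by (auto simp: Gamma_vertices_def)
  thus ?thesis using finite_lists_length_eq[OF f] by simp
qed

lemma Gv_card: "finite D \<Longrightarrow> card (Gamma_vertices D m) = card D ^ m"
proof -
  assume f: "finite D"
  have "Gamma_vertices D m = {xs. set xs \<subseteq> D \<and> length xs = m}" by (auto simp: Gamma_vertices_def)
  thus ?thesis using card_lists_length_eq[OF f] by simp
qed

lemma piece_Nil[simp]: "piece N F [] = F" by (simp add: piece_def word_map_Nil)

lemma piece_Cons: "piece N F (i#w) = gsc_map N i ` piece N F w"
  by (simp add: piece_def word_map_Cons image_comp)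

lemma gsc_map_cont: "continuous_on UNIV (gsc_map N i)"
  unfolding gsc_map_def divide_inverse by (intro continuous_intros)

lemma word_map_cont: "continuous_on UNIV (gsc_word_map N w)"
proof (induction w)
  case Nil thus ?case by (simp add: word_map_Nil)
next
  case (Cons i w) show ?case
    unfolding word_map_Cons by (rule continuous_on_compose[OF Cons.IH], rule continuous_on_subset[OF gsc_map_cont], simp)
qed

locale gscx =
  fixes N :: nat and D :: "(nat\<times>nat) set" and F :: "(real\<times>real) set"
  assumes params: "gsc_params N D" and attr: "gsc_attractor N D F" and Fconn: "connected F"
begin

lemma N2: "N \<ge> 2" using params by (simp add: gsc_params_def)
lemma Npos: "real N > 0" using N2 by simp
lemma Dgrid: "D \<subseteq> {0..<N} \<times> {0..<N}" using params by (simp add: gsc_params_def)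
lemma finD: "finite D" using Dgrid finite_subset by blast
lemma cardD: "card D \<ge> 2" using params by (simp add: gsc_params_def)
lemma Fcpt: "compact F" using attr by (simp add: gsc_attractor_def)
lemma Fne: "F \<noteq> {}" using attr by (simp add: gsc_attractor_def)
lemma Feq: "F = (\<Union>i\<in>D. gsc_map N i ` F)" using attr by (simp add: gsc_attractor_def)
lemma dig: "i \<in> D \<Longrightarrow> fst i < N \<and> snd i < N" using Dgrid by auto

lemma Fbox: assumes "z \<in> F" shows "0 \<le> fst z \<and> fst z \<le> 1 \<and> 0 \<le> snd z \<and> snd z \<le> 1"
proof -
  have rec: "\<exists>y\<in>F. \<exists>i\<in>D. z = gsc_map N i y" if "z \<in> F" for z
    using that Feq by blast
  have a: "0 \<le> fst z \<and> fst z \<le> 1"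
  proof (rule box_aux[of fst F N, OF _ Fne N2 _ assms])
    show "compact (fst ` F)" by (intro compact_continuous_image continuous_intros Fcpt)
    fix z assume "z \<in> F"
    then obtain y i where yi: "y \<in> F" "i \<in> D" "z = gsc_map N i y" using rec by blast
    have le: "fst i \<le> N - 1" using dig[OF yi(2)] by linarith
    have eq: "fst z = (fst y + real (fst i)) / real N" using yi(3) by (simp add: gsc_map_def)
    show "\<exists>y\<in>F. \<exists>c. c \<le> N - 1 \<and> fst z = (fst y + real c) / real N"
      using yi(1) le eq by blast
  qed
  have b: "0 \<le> snd z \<and> snd z \<le> 1"
  proof (rule box_aux[of snd F N, OF _ Fne N2 _ assms])
    show "compact (snd ` F)" by (intro compact_continuous_image continuous_intros Fcpt)
    fix z assume "z \<in> F"
    then obtain y i where yi: "y \<in> F" "i \<in> D" "z = gsc_map N i y" using rec by blast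
    have le: "snd i \<le> N - 1" using dig[OF yi(2)] by linarith
    have eq: "snd z = (snd y + real (snd i)) / real N" using yi(3) by (simp add: gsc_map_def)
    show "\<exists>y\<in>F. \<exists>c. c \<le> N - 1 \<and> snd z = (snd y + real c) / real N"
      using yi(1) le eq by blast
  qed
  show ?thesis using a b by simp
qed

lemma map_sub: assumes "i \<in> D" shows "gsc_map N i ` F \<subseteq> F"
proof -
  have "gsc_map N i ` F \<subseteq> (\<Union>j\<in>D. gsc_map N j ` F)" using assms by blast
  also have "\<dots> = F" by (rule Feq[symmetric])
  finally show ?thesis .
qed

lemma piece_sub: "set w \<subseteq> D \<Longrightarrow> piece N F w \<subseteq> F"
proof (induction w)
  case Nil thus ?case by simp
next
  case (Cons i w)
  hence "piece N F (i#w) \<subseteq> gsc_map N i ` F" by (auto simp: piece_Cons)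
  also have "\<dots> \<subseteq> F" using Cons.prems map_sub by simp
  finally show ?case .
qed

lemma F_union: "F = (\<Union>w\<in>Gamma_vertices D m. piece N F w)"
proof (induction m)
  case 0 thus ?case by (simp add: Gv_0)
next
  case (Suc m)
  have "(\<Union>w\<in>Gamma_vertices D (Suc m). piece N F w) = (\<Union>i\<in>D. \<Union>w\<in>Gamma_vertices D m. piece N F (i#w))"
  proof (rule set_eqI, rule iffI)
    fix x assume "x \<in> (\<Union>w\<in>Gamma_vertices D (Suc m). piece N F w)"
    then obtain w where w: "w \<in> Gamma_vertices D (Suc m)" "x \<in> piece N F w" by blast
    then obtain i u where "w = i#u" "i \<in> D" "u \<in> Gamma_vertices D m"
      by (cases w) (auto simp: Gamma_vertices_def)
    thus "x \<in> (\<Union>i\<in>D. \<Union>w\<in>Gamma_vertices D m. piece N F (i#w))" using w by blast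
  next
    fix x assume "x \<in> (\<Union>i\<in>D. \<Union>w\<in>Gamma_vertices D m. piece N F (i#w))"
    then obtain i u where "i\<in>D" "u \<in> Gamma_vertices D m" "x \<in> piece N F (i#u)" by blast
    thus "x \<in> (\<Union>w\<in>Gamma_vertices D (Suc m). piece N F w)" by (intro UN_I[of "i#u"]) auto
  qed
  also have "\<dots> = (\<Union>i\<in>D. gsc_map N i ` (\<Union>w\<in>Gamma_vertices D m. piece N F w))"
    by (simp add: piece_Cons image_UN)
  also have "\<dots> = (\<Union>i\<in>D. gsc_map N i ` F)" by (simp only: Suc[symmetric])
  also have "\<dots> = F" by (rule Feq[symmetric])
  finally show ?case by simp
qed

lemma block_union: "(\<Union>u\<in>Gamma_vertices D m. piece N F (i#u)) = gsc_map N i ` F"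
proof -
  have "(\<Union>u\<in>Gamma_vertices D m. piece N F (i#u)) = gsc_map N i ` (\<Union>u\<in>Gamma_vertices D m. piece N F u)"
    by (simp add: piece_Cons image_UN)
  thus ?thesis by (simp only: F_union[of m, symmetric])
qed

lemma piece_compact: "compact (piece N F w)"
  unfolding piece_def by (rule compact_continuous_image[OF continuous_on_subset[OF word_map_cont] Fcpt]) simp

lemma piece_closed: "closed (piece N F w)" using piece_compact compact_imp_closed by blast

lemma piece_connected: "connected (piece N F w)"
  unfolding piece_def by (rule connected_continuous_image[OF continuous_on_subset[OF word_map_cont] Fconn]) simp

lemma piece_ne: "piece N F w \<noteq> {}" using Fne by (simp add: piece_def)

end


lemma reach_refl: "x \<in> V \<Longrightarrow> graph_reach V E x x" by (simp add: graph_reach_def)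

lemma reach_in: "graph_reach V E x y \<Longrightarrow> x \<in> V \<and> y \<in> V" by (simp add: graph_reach_def)

lemma reach_trans: "graph_reach V E x y \<Longrightarrow> graph_reach V E y z \<Longrightarrow> graph_reach V E x z"
  unfolding graph_reach_def by (meson rtranclp_trans)

lemma reach_edge: "x \<in> V \<Longrightarrow> y \<in> V \<Longrightarrow> E x y \<Longrightarrow> graph_reach V E x y"
  unfolding graph_reach_def by (simp add: r_into_rtranclp)

lemma reach_mono: assumes "W \<subseteq> V" "graph_reach W E x y" shows "graph_reach V E x y"
proof -
  have "(\<lambda>a b. a \<in> W \<and> b \<in> W \<and> E a b)\<^sup>*\<^sup>* x y" using assms(2) by (simp add: graph_reach_def)
  hence "(\<lambda>a b. a \<in> V \<and> b \<in> V \<and> E a b)\<^sup>*\<^sup>* x y"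
    by (rule rtranclp_mono[THEN predicate2D, rotated]) (use assms(1) in auto)
  thus ?thesis using assms by (auto simp: graph_reach_def)
qed

lemma reach_induct_set:
  assumes "graph_reach V E x y" "x \<in> S"
    and "\<And>a b. a \<in> S \<Longrightarrow> a \<in> V \<Longrightarrow> b \<in> V \<Longrightarrow> E a b \<Longrightarrow> b \<in> S"
  shows "y \<in> S"
proof -
  have "(\<lambda>a b. a \<in> V \<and> b \<in> V \<and> E a b)\<^sup>*\<^sup>* x y" using assms(1) by (simp add: graph_reach_def)
  thus ?thesis
  proof (induction rule: rtranclp_induct)
    case base thus ?case using assms(2) .
  next
    case (step y z) thus ?case using assms(3) by blast
  qed
qed

lemma comps_conn:
  assumes "V \<noteq> {}" "\<forall>x\<in>V. \<forall>y\<in>V. graph_reach V E x y"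
  shows "graph_components V E = {V}"
proof -
  have eq: "{y. graph_reach V E x y} = V" if x: "x \<in> V" for x
  proof (rule set_eqI)
    fix y show "y \<in> {y. graph_reach V E x y} \<longleftrightarrow> y \<in> V"
      using assms(2) reach_in[of V E x y] x by auto
  qed
  show ?thesis
  proof (rule set_eqI, rule iffI)
    fix C assume "C \<in> graph_components V E"
    then obtain x where "x \<in> V" "C = {y. graph_reach V E x y}" unfolding graph_components_def by blast
    thus "C \<in> {V}" using eq by simp
  next
    fix C assume C: "C \<in> {V}"
    obtain x where x: "x \<in> V" using assms(1) by blast
    have "{y. graph_reach V E x y} \<in> graph_components V E" unfolding graph_components_def using x by blast
    thus "C \<in> graph_components V E" using C eq[OF x] by simp
  qed
qed

lemma comps_finite: assumes "finite V" shows "finite (graph_components V E)"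
proof -
  have "graph_components V E \<subseteq> Pow V"
  proof
    fix C assume "C \<in> graph_components V E"
    then obtain x where "C = {y. graph_reach V E x y}" unfolding graph_components_def by blast
    thus "C \<in> Pow V" using reach_in by fastforce
  qed
  thus ?thesis using assms finite_subset by blast
qed

lemma chi_lower:
  assumes fin: "finite V" and conn: "\<forall>x\<in>V. \<forall>y\<in>V. graph_reach V E x y" and v: "v \<in> V"
    and x1: "x1 \<in> V - {v}" and x2: "x2 \<in> V - {v}"
    and nr: "\<not> graph_reach (V - {v}) E x1 x2"
    and m1: "m \<le> card {y. graph_reach (V - {v}) E x1 y}"
    and m2: "m \<le> card {y. graph_reach (V - {v}) E x2 y}"
  shows "m \<le> chi V E"
proof -
  define C1 where "C1 = {y. graph_reach (V - {v}) E x1 y}"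
  define C2 where "C2 = {y. graph_reach (V - {v}) E x2 y}"
  have C1: "C1 \<in> graph_components (V - {v}) E" unfolding C1_def graph_components_def using x1 by blast
  have C2: "C2 \<in> graph_components (V - {v}) E" unfolding C2_def graph_components_def using x2 by blast
  have ne: "C1 \<noteq> C2"
  proof
    assume "C1 = C2"
    moreover have "x2 \<in> C2" unfolding C2_def using x2 by (simp add: reach_refl)
    ultimately have "x2 \<in> C1" by simp
    thus False using nr unfolding C1_def by simp
  qed
  have fin': "finite (graph_components (V - {v}) E)" using fin by (intro comps_finite) simp
  have "{C1, C2} \<subseteq> graph_components (V - {v}) E" using C1 C2 by simp
  hence "card {C1, C2} \<le> card (graph_components (V - {v}) E)" using fin' card_mono by blast
  hence c2: "2 \<le> card (graph_components (V - {v}) E)" using ne by simp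
  have "V \<noteq> {}" using v by auto
  hence c1: "card (graph_components V E) = 1" using comps_conn[OF _ conn] by simp
  have cut: "cut_vertex V E v" unfolding cut_vertex_def using v c1 c2 by simp
  define S where "S = {min (card C1) (card C2) | C1 C2.
      C1 \<in> graph_components (V - {v}) E \<and> C2 \<in> graph_components (V - {v}) E \<and> C1 \<noteq> C2}"
  have finS: "finite S"
  proof -
    have "S \<subseteq> (\<lambda>(A,B). min (card A) (card B)) ` (graph_components (V - {v}) E \<times> graph_components (V - {v}) E)"
    proof
      fix s assume "s \<in> S"
      then obtain A B where AB: "s = min (card A) (card B)" "A \<in> graph_components (V - {v}) E"
          "B \<in> graph_components (V - {v}) E" unfolding S_def by blast
      thus "s \<in> (\<lambda>(A,B). min (card A) (card B)) ` (graph_components (V - {v}) E \<times> graph_components (V - {v}) E)"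
        by (intro image_eqI[of _ _ "(A,B)"]) auto
    qed
    thus ?thesis using fin' finite_subset by blast
  qed
  have "min (card C1) (card C2) \<in> S" unfolding S_def using C1 C2 ne by blast
  hence "min (card C1) (card C2) \<le> second_largest_comp (V - {v}) E"
    unfolding second_largest_comp_def S_def[symmetric] using finS by (intro Max_ge) auto
  hence sl: "m \<le> second_largest_comp (V - {v}) E" using m1 m2 unfolding C1_def C2_def by linarith
  define T where "T = {second_largest_comp (V - {v}) E | v. cut_vertex V E v}"
  have finT: "finite T"
  proof -
    have "T \<subseteq> (\<lambda>v. second_largest_comp (V - {v}) E) ` V" unfolding T_def cut_vertex_def by blast
    thus ?thesis using fin finite_subset by blast
  qed
  have "second_largest_comp (V - {v}) E \<in> T" unfolding T_def using cut by blast
  hence "second_largest_comp (V - {v}) E \<le> chi V E"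
    unfolding chi_def T_def[symmetric] using finT by (intro Max_ge) auto
  thus ?thesis using sl by linarith
qed

context gscx begin

lemma conn_words:
  assumes finW: "finite W" and cn: "connected (\<Union>w\<in>W. piece N F w)"
  shows "\<forall>x\<in>W. \<forall>y\<in>W. graph_reach W (Gamma_edge N F) x y"
proof (intro ballI, rule ccontr)
  fix x y assume x: "x \<in> W" and y: "y \<in> W" and nr: "\<not> graph_reach W (Gamma_edge N F) x y"
  define R where "R = {z \<in> W. graph_reach W (Gamma_edge N F) x z}"
  define U1 where "U1 = (\<Union>w\<in>R. piece N F w)"
  define U2 where "U2 = (\<Union>w\<in>W - R. piece N F w)"
  have cl1: "closed U1" unfolding U1_def R_def using finW piece_closed by (intro closed_UN) auto
  have cl2: "closed U2" unfolding U2_def using finW piece_closed by (intro closed_UN) auto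
  have un: "(\<Union>w\<in>W. piece N F w) \<subseteq> U1 \<union> U2" unfolding U1_def U2_def by blast
  have dis: "U1 \<inter> U2 = {}"
  proof (rule ccontr)
    assume "U1 \<inter> U2 \<noteq> {}"
    then obtain r s z where r: "r \<in> R" and s: "s \<in> W - R" and z: "z \<in> piece N F r" "z \<in> piece N F s"
      unfolding U1_def U2_def by blast
    have "r \<noteq> s" using r s by blast
    hence "Gamma_edge N F r s" unfolding Gamma_edge_def piece_def[symmetric] using z by blast
    hence "graph_reach W (Gamma_edge N F) r s" using r s by (intro reach_edge) (auto simp: R_def)
    hence "graph_reach W (Gamma_edge N F) x s" using r unfolding R_def by (blast intro: reach_trans)
    thus False using s R_def by blast
  qed
  have xR: "x \<in> R" unfolding R_def using x by (simp add: reach_refl)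
  have yR: "y \<in> W - R" unfolding R_def using y nr by simp
  have n1: "U1 \<inter> (\<Union>w\<in>W. piece N F w) \<noteq> {}"
    using xR x piece_ne[of x] unfolding U1_def R_def by blast
  have n2: "U2 \<inter> (\<Union>w\<in>W. piece N F w) \<noteq> {}"
    using yR y piece_ne[of y] unfolding U2_def by blast
  show False using cn[unfolded connected_closed] cl1 cl2 un dis n1 n2 by blast
qed

end

context gscx begin

lemma V_conn: "\<forall>x\<in>Gamma_vertices D k. \<forall>y\<in>Gamma_vertices D k. graph_reach (Gamma_vertices D k) (Gamma_edge N F) x y"
  by (rule conn_words[OF Gv_finite[OF finD]]) (simp add: F_union[symmetric] Fconn)

lemma block_conn:
  "\<forall>x\<in>(\<lambda>u. i#u) ` Gamma_vertices D m. \<forall>y\<in>(\<lambda>u. i#u) ` Gamma_vertices D m.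
     graph_reach ((\<lambda>u. i#u) ` Gamma_vertices D m) (Gamma_edge N F) x y"
proof (rule conn_words)
  show "finite ((\<lambda>u. i#u) ` Gamma_vertices D m)" using Gv_finite[OF finD] by simp
  have "(\<Union>w\<in>(\<lambda>u. i#u) ` Gamma_vertices D m. piece N F w) = gsc_map N i ` F"
    using block_union[where m=m and i=i] by simp
  moreover have "connected (gsc_map N i ` F)"
    by (rule connected_continuous_image[OF continuous_on_subset[OF gsc_map_cont] Fconn]) simp
  ultimately show "connected (\<Union>w\<in>(\<lambda>u. i#u) ` Gamma_vertices D m. piece N F w)" by simp
qed

lemma block_card: "card ((\<lambda>u. i#u) ` Gamma_vertices D m) = card D ^ m"
  by (simp add: card_image Gv_card[OF finD])

lemma Gv_ne: "Gamma_vertices D m \<noteq> {}"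
proof -
  have "D \<noteq> {}" using cardD by (metis card.empty not_numeral_le_zero)
  then obtain d where "d \<in> D" by blast
  hence "replicate m d \<in> Gamma_vertices D m" by (auto simp: Gamma_vertices_def)
  thus ?thesis by blast
qed

lemma block_sub: "i \<in> D \<Longrightarrow> (\<lambda>u. i#u) ` Gamma_vertices D m \<subseteq> Gamma_vertices D (Suc m)"
  by auto

end

locale fragx = gscx +
  fixes X Y :: "(nat\<times>nat) set" and p :: "real\<times>real"
  assumes XY: "X \<union> Y = D" "X \<inter> Y = {}" "X \<noteq> {}" "Y \<noteq> {}"
    and sing: "(\<Union>i\<in>X. gsc_map N i ` F) \<inter> (\<Union>i\<in>Y. gsc_map N i ` F) = {p}"
begin

lemma swap: "fragx N D F Y X p"
  using XY sing by unfold_locales auto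

definition S :: "nat \<Rightarrow> (nat\<times>nat) list set" where
  "S k = {w \<in> Gamma_vertices D k. hd w \<in> X \<and> p \<in> piece N F w}"

lemma piece_side: "i \<in> D \<Longrightarrow> piece N F (i#u) \<subseteq> gsc_map N i ` F" if "set u \<subseteq> D"
  using piece_sub[OF that] by (auto simp: piece_Cons)

lemma cross:
  assumes "w \<in> Gamma_vertices D (Suc m)" "w' \<in> Gamma_vertices D (Suc m)" "hd w \<in> X" "hd w' \<in> Y"
  shows "piece N F w \<inter> piece N F w' \<subseteq> {p}"
proof -
  obtain i u where w: "w = i#u" "i \<in> D" "u \<in> Gamma_vertices D m" using assms(1) by (cases w) (auto simp: Gamma_vertices_def)
  obtain j u' where w': "w' = j#u'" "j \<in> D" "u' \<in> Gamma_vertices D m" using assms(2) by (cases w') (auto simp: Gamma_vertices_def)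
  have "piece N F w \<subseteq> (\<Union>i\<in>X. gsc_map N i ` F)"
    using piece_side[of u i] w assms(3) by (auto simp: Gamma_vertices_def)
  moreover have "piece N F w' \<subseteq> (\<Union>i\<in>Y. gsc_map N i ` F)"
    using piece_side[of u' j] w' assms(4) by (auto simp: Gamma_vertices_def)
  ultimately show ?thesis using sing by blast
qed

lemma pX: "p \<in> (\<Union>i\<in>X. gsc_map N i ` F)" using sing by blast

lemma S_ne: "S (Suc m) \<noteq> {}"
proof -
  obtain i where i: "i \<in> X" "p \<in> gsc_map N i ` F" using pX by blast
  then obtain u where u: "u \<in> Gamma_vertices D m" "p \<in> piece N F (i#u)"
    using block_union[where m=m and i=i] by blast
  have "i \<in> D" using i XY by blast
  hence "i#u \<in> S (Suc m)" using i u by (simp add: S_def)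
  thus ?thesis by blast
qed

lemma S_sub: "S k \<subseteq> Gamma_vertices D k" by (auto simp: S_def)

lemma good:
  assumes k: "k \<ge> 2" and Sv: "S k = {v}"
    and alt: "card X \<ge> 2 \<or> (\<forall>x\<in>(\<lambda>u. hd v#u) ` Gamma_vertices D (k-1) - {v}.
                \<forall>y\<in>(\<lambda>u. hd v#u) ` Gamma_vertices D (k-1) - {v}.
                graph_reach ((\<lambda>u. hd v#u) ` Gamma_vertices D (k-1) - {v}) (Gamma_edge N F) x y)"
  shows "card D ^ (k-1) - 1 \<le> chi (Gamma_vertices D k) (Gamma_edge N F)"
proof -
  define m where "m = k - 1"
  have km: "k = Suc m" using k m_def by simp
  define VV where "VV = Gamma_vertices D k"
  define M where "M = card D ^ m"
  have vS: "v \<in> S k" using Sv by blast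
  hence vV: "v \<in> VV" and hv: "hd v \<in> X" using S_def VV_def by auto
  have finV: "finite VV" unfolding VV_def by (rule Gv_finite[OF finD])
  have M2: "M \<ge> 2"
  proof -
    have "m \<ge> 1" using k m_def by simp
    hence "card D ^ 1 \<le> card D ^ m" using cardD by (intro power_increasing) auto
    thus ?thesis using cardD M_def by simp
  qed
  obtain y0 where y0: "y0 \<in> Y" using XY by blast
  have y0D: "y0 \<in> D" using y0 XY by blast
  define B where "B = (\<lambda>u. y0#u) ` Gamma_vertices D m"
  have BV: "B \<subseteq> VV - {v}"
  proof -
    have "B \<subseteq> VV" unfolding B_def VV_def km using y0D by auto
    moreover have "v \<notin> B" unfolding B_def using hv y0 XY(2) by auto
    ultimately show ?thesis by blast
  qed
  have Bc: "\<forall>x\<in>B. \<forall>y\<in>B. graph_reach B (Gamma_edge N F) x y" unfolding B_def by (rule block_conn)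
  have Bcard: "card B = M" unfolding B_def M_def by (rule block_card)
  obtain x2 where x2: "x2 \<in> B" using Gv_ne[of m] B_def by blast
  obtain W1 where W1: "W1 \<subseteq> VV - {v}" "\<forall>x\<in>W1. \<forall>y\<in>W1. graph_reach W1 (Gamma_edge N F) x y"
      "card W1 \<ge> M - 1" "W1 \<noteq> {}" "\<forall>w\<in>W1. hd w \<in> X"
  proof (cases "card X \<ge> 2")
    case True
    have "\<exists>x0\<in>X. x0 \<noteq> hd v"
    proof (rule ccontr)
      assume "\<not> ?thesis"
      hence "X \<subseteq> {hd v}" by blast
      hence "card X \<le> card {hd v}" by (intro card_mono) auto
      hence "card X \<le> 1" by simp
      thus False using True by simp
    qed
    then obtain x0 where x0: "x0 \<in> X" "x0 \<noteq> hd v" by blast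
    have x0D: "x0 \<in> D" using x0 XY by blast
    define W where "W = (\<lambda>u. x0#u) ` Gamma_vertices D m"
    have "W \<subseteq> VV - {v}" unfolding W_def VV_def km using x0 x0D by auto
    moreover have "\<forall>x\<in>W. \<forall>y\<in>W. graph_reach W (Gamma_edge N F) x y" unfolding W_def by (rule block_conn)
    moreover have "card W \<ge> M - 1" unfolding W_def M_def using block_card by simp
    moreover have "W \<noteq> {}" unfolding W_def using Gv_ne by simp
    moreover have "\<forall>w\<in>W. hd w \<in> X" unfolding W_def using x0 by auto
    ultimately show ?thesis using that by blast
  next
    case False
    define W where "W = (\<lambda>u. hd v#u) ` Gamma_vertices D (k-1) - {v}"
    have hvD: "hd v \<in> D" using hv XY by blast
    have "W \<subseteq> VV - {v}" unfolding W_def VV_def km using hvD by auto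
    moreover have "\<forall>x\<in>W. \<forall>y\<in>W. graph_reach W (Gamma_edge N F) x y" using alt False W_def by blast
    moreover have cW: "card W \<ge> M - 1"
    proof -
      have "card ((\<lambda>u. hd v#u) ` Gamma_vertices D (k-1)) = M" unfolding M_def m_def by (rule block_card)
      moreover have "card W = (if v \<in> (\<lambda>u. hd v#u) ` Gamma_vertices D (k-1) then card ((\<lambda>u. hd v#u) ` Gamma_vertices D (k-1)) - 1 else card ((\<lambda>u. hd v#u) ` Gamma_vertices D (k-1)))"
        unfolding W_def by (rule card_Diff_singleton_if)
      ultimately show ?thesis by auto
    qed
    moreover have "W \<noteq> {}"
    proof
      assume "W = {}" hence "card W = 0" by simp
      thus False using cW M2 by linarith
    qed
    moreover have "\<forall>w\<in>W. hd w \<in> X" unfolding W_def using hv by auto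
    ultimately show ?thesis using that by blast
  qed
  obtain x1 where x1: "x1 \<in> W1" using W1(4) by blast
  have sep: "hd z \<in> X" if "graph_reach (VV - {v}) (Gamma_edge N F) x1 z" for z
  proof -
    have "z \<in> {w. hd w \<in> X}"
    proof (rule reach_induct_set[OF that])
      show "x1 \<in> {w. hd w \<in> X}" using x1 W1(5) by blast
      fix a b assume a: "a \<in> {w. hd w \<in> X}" "a \<in> VV - {v}" and b: "b \<in> VV - {v}" and e: "Gamma_edge N F a b"
      show "b \<in> {w. hd w \<in> X}"
      proof (rule ccontr)
        assume nb: "b \<notin> {w. hd w \<in> X}"
        have bD: "b \<in> Gamma_vertices D (Suc m)" using b VV_def km by simp
        have "b \<noteq> []" using bD by (auto simp: Gamma_vertices_def)
        hence "hd b \<in> D" using bD by (cases b) (auto simp: Gamma_vertices_def)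
        hence hbY: "hd b \<in> Y" using nb XY by blast
        have aD: "a \<in> Gamma_vertices D (Suc m)" using a VV_def km by simp
        have "piece N F a \<inter> piece N F b \<subseteq> {p}" using cross[OF aD bD] a hbY by simp
        moreover have "piece N F a \<inter> piece N F b \<noteq> {}" using e by (simp add: Gamma_edge_def piece_def)
        ultimately have "p \<in> piece N F a" by blast
        hence "a \<in> S k" using a aD km by (simp add: S_def)
        thus False using Sv a by blast
      qed
    qed
    thus ?thesis by simp
  qed
  have nr: "\<not> graph_reach (VV - {v}) (Gamma_edge N F) x1 x2"
  proof
    assume "graph_reach (VV - {v}) (Gamma_edge N F) x1 x2"
    hence "hd x2 \<in> X" by (rule sep)
    moreover have "hd x2 = y0" using x2 B_def by auto
    ultimately show False using y0 XY by blast
  qed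
  have sub1: "W1 \<subseteq> {y. graph_reach (VV - {v}) (Gamma_edge N F) x1 y}"
  proof
    fix y assume y: "y \<in> W1"
    have "graph_reach W1 (Gamma_edge N F) x1 y" using W1(2) x1 y by blast
    thus "y \<in> {y. graph_reach (VV - {v}) (Gamma_edge N F) x1 y}" using reach_mono[OF W1(1)] by blast
  qed
  have sub2: "B \<subseteq> {y. graph_reach (VV - {v}) (Gamma_edge N F) x2 y}"
  proof
    fix y assume y: "y \<in> B"
    have "graph_reach B (Gamma_edge N F) x2 y" using Bc x2 y by blast
    thus "y \<in> {y. graph_reach (VV - {v}) (Gamma_edge N F) x2 y}" using reach_mono[OF BV] by blast
  qed
  have "{y. graph_reach (VV - {v}) (Gamma_edge N F) x1 y} \<subseteq> VV" by (auto dest: reach_in)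
  hence fin1: "finite {y. graph_reach (VV - {v}) (Gamma_edge N F) x1 y}" using finV finite_subset by blast
  have "{y. graph_reach (VV - {v}) (Gamma_edge N F) x2 y} \<subseteq> VV" by (auto dest: reach_in)
  hence fin2: "finite {y. graph_reach (VV - {v}) (Gamma_edge N F) x2 y}" using finV finite_subset by blast
  have m1: "M - 1 \<le> card {y. graph_reach (VV - {v}) (Gamma_edge N F) x1 y}"
    using card_mono[OF fin1 sub1] W1(3) by linarith
  have m2: "M - 1 \<le> card {y. graph_reach (VV - {v}) (Gamma_edge N F) x2 y}"
    using card_mono[OF fin2 sub2] Bcard by linarith
  have "M - 1 \<le> chi VV (Gamma_edge N F)"
    by (rule chi_lower[OF finV _ vV _ _ nr m1 m2]) (use V_conn VV_def W1(1) x1 BV x2 in auto)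
  thus ?thesis unfolding VV_def M_def m_def .
qed

end

lemma two_nat:
  fixes t :: real
  assumes "a \<noteq> b" "t - 1 \<le> real a" "real a \<le> t" "t - 1 \<le> real b" "real b \<le> t"
  shows "t = real (max a b)"
proof (cases "a < b")
  case True
  hence "real a + 1 \<le> real b" by (metis of_nat_1 of_nat_add of_nat_le_iff Suc_eq_plus1 Suc_leI)
  thus ?thesis using assms True by (simp add: max_def)
next
  case False
  hence "b < a" using assms(1) by simp
  hence "real b + 1 \<le> real a" by (metis of_nat_1 of_nat_add of_nat_le_iff Suc_eq_plus1 Suc_leI)
  thus ?thesis using assms \<open>b < a\<close> by (simp add: max_def)
qed

lemma three_nat:
  fixes t :: real
  assumes "t - 1 \<le> real a" "real a \<le> t" "t - 1 \<le> real b" "real b \<le> t" "t - 1 \<le> real c" "real c \<le> t"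
  shows "a = b \<or> b = c \<or> a = c"
proof (rule ccontr)
  assume "\<not> ?thesis"
  hence d: "a \<noteq> b" "b \<noteq> c" "a \<noteq> c" by auto
  have "t = real (max a b)" "t = real (max b c)" "t = real (max a c)"
    using two_nat assms d by blast+
  hence "max a b = max b c" "max b c = max a c" by (metis of_nat_eq_iff)+
  thus False using d by (auto simp: max_def split: if_splits)
qed

lemma nat_corner:
  fixes t :: real
  assumes "t = real n" "0 \<le> t - real P" "t - real P \<le> 1"
  shows "t - real P = 0 \<or> t - real P = 1"
proof -
  have "P \<le> n" using assms by simp
  moreover have "n \<le> P + 1" using assms by simp
  ultimately have "n = P \<or> n = P + 1" by linarith
  thus ?thesis using assms by auto
qed

definition corners :: "(real\<times>real) set" where "corners = {0,1} \<times> {0,1}"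

definition adj :: "real\<times>real \<Rightarrow> real\<times>real \<Rightarrow> bool" where
  "adj a b \<longleftrightarrow> (fst a \<noteq> fst b \<and> snd a = snd b) \<or> (fst a = fst b \<and> snd a \<noteq> snd b)"

lemma corners_adj:
  assumes "z1 \<in> corners" "z2 \<in> corners" "z3 \<in> corners" "z1 \<noteq> z2" "z3 \<noteq> z1" "z3 \<noteq> z2"
  shows "adj z3 z1 \<or> adj z3 z2"
proof (rule ccontr)
  assume "\<not> ?thesis"
  hence n: "\<not> adj z3 z1" "\<not> adj z3 z2" by auto
  have o1: "fst z1 \<noteq> fst z3 \<and> snd z1 \<noteq> snd z3" using n(1) assms(5) unfolding adj_def by (auto simp: prod_eq_iff)
  have o2: "fst z2 \<noteq> fst z3 \<and> snd z2 \<noteq> snd z3" using n(2) assms(6) unfolding adj_def by (auto simp: prod_eq_iff)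
  have t: "\<And>a b c::real. a\<in>{0,1} \<Longrightarrow> b\<in>{0,1} \<Longrightarrow> c\<in>{0,1} \<Longrightarrow> a \<noteq> c \<Longrightarrow> b \<noteq> c \<Longrightarrow> a = b" by auto
  have c: "fst z1 \<in> {0,1}" "snd z1 \<in> {0,1}" "fst z2 \<in> {0,1}" "snd z2 \<in> {0,1}" "fst z3 \<in> {0,1}" "snd z3 \<in> {0,1}"
    using assms(1-3) unfolding corners_def by auto
  have "fst z1 = fst z2" using t[OF c(1) c(3) c(5)] o1 o2 by blast
  moreover have "snd z1 = snd z2" using t[OF c(2) c(4) c(6)] o1 o2 by blast
  ultimately show False using assms(4) by (simp add: prod_eq_iff)
qed

lemma corners_all:
  assumes "z1 \<in> corners" "z2 \<in> corners" "z3 \<in> corners" "z4 \<in> corners"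
    "z1 \<noteq> z2" "z1 \<noteq> z3" "z1 \<noteq> z4" "z2 \<noteq> z3" "z2 \<noteq> z4" "z3 \<noteq> z4"
  shows "corners = {z1,z2,z3,z4}"
proof -
  have fin: "finite corners" unfolding corners_def by simp
  have c4: "card corners = 4" unfolding corners_def by simp
  have sub: "{z1,z2,z3,z4} \<subseteq> corners" using assms by simp
  have "card {z1,z2,z3,z4} = 4" using assms by simp
  thus ?thesis using card_subset_eq[OF fin sub] c4 by simp
qed

context gscx begin

lemma wpos_bound: "set w \<subseteq> D \<Longrightarrow> fst (wpos N w) < N ^ length w \<and> snd (wpos N w) < N ^ length w"
proof (induction w)
  case Nil show ?case by simp
next
  case (Cons i w)
  have i: "fst i < N" "snd i < N" using dig Cons.prems by auto
  have ih: "fst (wpos N w) < N ^ length w" "snd (wpos N w) < N ^ length w" using Cons by auto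
  have a: "fst i * N ^ length w + fst (wpos N w) < N ^ Suc (length w)"
  proof -
    have "fst i * N^length w + fst (wpos N w) < fst i * N^length w + N^length w" using ih by simp
    also have "\<dots> = (fst i + 1) * N^length w" by simp
    also have "\<dots> \<le> N * N^length w" using i by (intro mult_right_mono) auto
    finally show ?thesis by simp
  qed
  have b: "snd i * N ^ length w + snd (wpos N w) < N ^ Suc (length w)"
  proof -
    have "snd i * N^length w + snd (wpos N w) < snd i * N^length w + N^length w" using ih by simp
    also have "\<dots> = (snd i + 1) * N^length w" by simp
    also have "\<dots> \<le> N * N^length w" using i by (intro mult_right_mono) auto
    finally show ?thesis by simp
  qed
  show ?case using a b by simp
qed

lemma divmod_aux: "(a::nat) < b \<Longrightarrow> (c * b + a) div b = c \<and> (c * b + a) mod b = a"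
  by simp

lemma wpos_inj: "length w = length w' \<Longrightarrow> set w \<subseteq> D \<Longrightarrow> set w' \<subseteq> D \<Longrightarrow> wpos N w = wpos N w' \<Longrightarrow> w = w'"
proof (induction w arbitrary: w')
  case Nil thus ?case by simp
next
  case (Cons i w)
  obtain j u where w': "w' = j#u" using Cons.prems(1) by (cases w') auto
  have len: "length u = length w" using Cons.prems(1) w' by simp
  have bw: "fst (wpos N w) < N ^ length w" "snd (wpos N w) < N ^ length w" using wpos_bound Cons.prems(2) by auto
  have su: "set u \<subseteq> D" using Cons.prems(3) w' by simp
  have bu: "fst (wpos N u) < N ^ length w" "snd (wpos N u) < N ^ length w" using wpos_bound[OF su] len by auto
  have e1: "fst i * N ^ length w + fst (wpos N w) = fst j * N ^ length w + fst (wpos N u)"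
    using Cons.prems(4) w' len by simp
  have e2: "snd i * N ^ length w + snd (wpos N w) = snd j * N ^ length w + snd (wpos N u)"
    using Cons.prems(4) w' len by simp
  have "fst i = fst j \<and> fst (wpos N w) = fst (wpos N u)"
    using divmod_aux[OF bw(1), of "fst i"] divmod_aux[OF bu(1), of "fst j"] e1 by metis
  moreover have "snd i = snd j \<and> snd (wpos N w) = snd (wpos N u)"
    using divmod_aux[OF bw(2), of "snd i"] divmod_aux[OF bu(2), of "snd j"] e2 by metis
  ultimately have "i = j" "wpos N w = wpos N u" by (auto simp: prod_eq_iff)
  moreover have "w = u" using Cons.IH[OF len[symmetric]] Cons.prems(2,3) w' \<open>wpos N w = wpos N u\<close> by simp
  ultimately show ?case using w' by simp
qed

end

context fragx begin

definition SY :: "nat \<Rightarrow> (nat\<times>nat) list set" where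
  "SY k = {w \<in> Gamma_vertices D k. hd w \<in> Y \<and> p \<in> piece N F w}"

lemma S_swap: "fragx.S N D F Y p = SY"
  by (simp add: fragx.S_def[OF swap] SY_def fun_eq_iff)

definition zc :: "nat \<Rightarrow> (nat\<times>nat) list \<Rightarrow> real\<times>real" where
  "zc k w = (real N ^ k * fst p - real (fst (wpos N w)), real N ^ k * snd p - real (snd (wpos N w)))"

lemma map_zc: "length w = k \<Longrightarrow> gsc_word_map N w z =
   ((fst z - fst (zc k w) + real N ^ k * fst p) / real N ^ k, (snd z - snd (zc k w) + real N ^ k * snd p) / real N ^ k)"
  using word_map_formula[of N w z] N2 by (simp add: zc_def)

lemma zc_in: assumes "length w = k" "p \<in> piece N F w"
  shows "zc k w \<in> F" "gsc_word_map N w (zc k w) = p"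
proof -
  obtain y where y: "y \<in> F" "p = gsc_word_map N w y" using assms(2) by (auto simp: piece_def)
  have Nk: "real N ^ k > 0" using Npos by simp
  have "fst p = (fst y + real (fst (wpos N w))) / real N ^ k" "snd p = (snd y + real (snd (wpos N w))) / real N ^ k"
    using y(2) word_map_formula[of N w y] N2 assms(1) by auto
  hence "y = zc k w" using Nk unfolding zc_def by (auto simp: field_simps prod_eq_iff)
  thus "zc k w \<in> F" "gsc_word_map N w (zc k w) = p" using y by auto
qed

lemma zc_box: assumes "length w = k" "p \<in> piece N F w"
  shows "0 \<le> fst (zc k w) \<and> fst (zc k w) \<le> 1 \<and> 0 \<le> snd (zc k w) \<and> snd (zc k w) \<le> 1"
  using Fbox zc_in[OF assms] by blast

lemma zc_inj: assumes "w \<in> Gamma_vertices D k" "w' \<in> Gamma_vertices D k" "zc k w = zc k w'"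
  shows "w = w'"
proof -
  have "wpos N w = wpos N w'" using assms(3) unfolding zc_def by (auto simp: prod_eq_iff)
  thus ?thesis using wpos_inj assms(1,2) by (auto simp: Gamma_vertices_def)
qed


lemma coord_int:
  fixes t u :: real
  assumes "(a1,b1) \<noteq> (a2,b2)" "(a1,b1) \<noteq> (a3,b3)" "(a2,b2) \<noteq> (a3,b3)"
    "t - 1 \<le> real a1" "real a1 \<le> t" "t - 1 \<le> real a2" "real a2 \<le> t" "t - 1 \<le> real a3" "real a3 \<le> t"
    "u - 1 \<le> real b1" "real b1 \<le> u" "u - 1 \<le> real b2" "real b2 \<le> u" "u - 1 \<le> real b3" "real b3 \<le> u"
  shows "\<exists>n::nat. t = real n"
proof -
  consider "a1 \<noteq> a2" | "a1 \<noteq> a3" | "a1 = a2 \<and> a1 = a3" by blast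
  thus ?thesis
  proof cases
    case 1 thus ?thesis using two_nat[OF 1] assms by blast
  next
    case 2 thus ?thesis using two_nat[OF 2] assms by blast
  next
    case 3
    hence "b1 \<noteq> b2" "b1 \<noteq> b3" "b2 \<noteq> b3" using assms(1-3) by auto
    thus ?thesis using three_nat[of u b1 b2 b3] assms by blast
  qed
qed

lemma t_int:
  assumes w: "w1 \<in> Gamma_vertices D k" "w2 \<in> Gamma_vertices D k" "w3 \<in> Gamma_vertices D k"
    "p \<in> piece N F w1" "p \<in> piece N F w2" "p \<in> piece N F w3" "w1 \<noteq> w2" "w1 \<noteq> w3" "w2 \<noteq> w3"
  shows "(\<exists>n::nat. real N ^ k * fst p = real n) \<and> (\<exists>n::nat. real N ^ k * snd p = real n)"
proof -
  have len: "length w1 = k" "length w2 = k" "length w3 = k" using w by (auto simp: Gamma_vertices_def)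
  have b1: "0 \<le> fst (zc k w1) \<and> fst (zc k w1) \<le> 1 \<and> 0 \<le> snd (zc k w1) \<and> snd (zc k w1) \<le> 1" using zc_box len w by blast
  have b2: "0 \<le> fst (zc k w2) \<and> fst (zc k w2) \<le> 1 \<and> 0 \<le> snd (zc k w2) \<and> snd (zc k w2) \<le> 1" using zc_box len w by blast
  have b3: "0 \<le> fst (zc k w3) \<and> fst (zc k w3) \<le> 1 \<and> 0 \<le> snd (zc k w3) \<and> snd (zc k w3) \<le> 1" using zc_box len w by blast
  have d: "wpos N w1 \<noteq> wpos N w2" "wpos N w1 \<noteq> wpos N w3" "wpos N w2 \<noteq> wpos N w3"
    using wpos_inj w by (auto simp: Gamma_vertices_def)
  have d': "(fst (wpos N w1), snd (wpos N w1)) \<noteq> (fst (wpos N w2), snd (wpos N w2))"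
    "(fst (wpos N w1), snd (wpos N w1)) \<noteq> (fst (wpos N w3), snd (wpos N w3))"
    "(fst (wpos N w2), snd (wpos N w2)) \<noteq> (fst (wpos N w3), snd (wpos N w3))" using d by auto
  have d'': "(snd (wpos N w1), fst (wpos N w1)) \<noteq> (snd (wpos N w2), fst (wpos N w2))"
    "(snd (wpos N w1), fst (wpos N w1)) \<noteq> (snd (wpos N w3), fst (wpos N w3))"
    "(snd (wpos N w2), fst (wpos N w2)) \<noteq> (snd (wpos N w3), fst (wpos N w3))" using d by (auto simp: prod_eq_iff)
  show ?thesis
  proof
    show "\<exists>n::nat. real N ^ k * fst p = real n"
      by (rule coord_int[OF d']) (use b1 b2 b3 in \<open>auto simp: zc_def\<close>)
    show "\<exists>n::nat. real N ^ k * snd p = real n"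
      by (rule coord_int[OF d'']) (use b1 b2 b3 in \<open>auto simp: zc_def\<close>)
  qed
qed

lemma zc_corner:
  assumes "w \<in> Gamma_vertices D k" "p \<in> piece N F w"
    and "(\<exists>n::nat. real N ^ k * fst p = real n) \<and> (\<exists>n::nat. real N ^ k * snd p = real n)"
  shows "zc k w \<in> corners"
proof -
  have len: "length w = k" using assms by (auto simp: Gamma_vertices_def)
  have b: "0 \<le> fst (zc k w) \<and> fst (zc k w) \<le> 1 \<and> 0 \<le> snd (zc k w) \<and> snd (zc k w) \<le> 1" using zc_box len assms by blast
  obtain n1 n2 :: nat where n: "real N ^ k * fst p = real n1" "real N ^ k * snd p = real n2" using assms(3) by blast
  have "fst (zc k w) = 0 \<or> fst (zc k w) = 1"
    using nat_corner[OF n(1)] b unfolding zc_def by simp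
  moreover have "snd (zc k w) = 0 \<or> snd (zc k w) = 1"
    using nat_corner[OF n(2)] b unfolding zc_def by simp
  ultimately show ?thesis unfolding corners_def mem_Times_iff by auto
qed

lemma adj_contra:
  assumes w: "length w = k" "length w' = k" "p \<in> piece N F w" "p \<in> piece N F w'"
    and cr: "piece N F w \<inter> piece N F w' \<subseteq> {p}"
    and c: "zc k w \<in> corners" "zc k w' \<in> corners" "adj (zc k w') (zc k w)" and all: "corners \<subseteq> F"
  shows False
proof -
  have Nk: "real N ^ k > 0" using Npos by simp
  have pt: "gsc_word_map N w z \<in> piece N F w \<inter> piece N F w'" if "z \<in> F" "z' \<in> F" "gsc_word_map N w z = gsc_word_map N w' z'" for z z'
  proof -
    have "gsc_word_map N w z \<in> piece N F w" using that(1) unfolding piece_def by blast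
    moreover have "gsc_word_map N w' z' \<in> piece N F w'" using that(2) unfolding piece_def by blast
    ultimately show ?thesis using that(3) by simp
  qed
  consider (x) "fst (zc k w') \<noteq> fst (zc k w)" "snd (zc k w') = snd (zc k w)"
    | (y) "fst (zc k w') = fst (zc k w)" "snd (zc k w') \<noteq> snd (zc k w)" using c(3) unfolding adj_def by blast
  thus False
  proof cases
    case x
    have inF: "(fst (zc k w), s) \<in> F" "(fst (zc k w'), s) \<in> F" if "s \<in> {0,1}" for s
      using c(1,2) all that unfolding corners_def by auto
    have eq: "gsc_word_map N w (fst (zc k w), s) = gsc_word_map N w' (fst (zc k w'), s)" for s
      using map_zc[OF w(1)] map_zc[OF w(2)] x by simp
    have "gsc_word_map N w (fst (zc k w), 0) = p" "gsc_word_map N w (fst (zc k w), 1) = p"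
      using pt[OF inF(1) inF(2) eq] cr by auto
    hence "snd (gsc_word_map N w (fst (zc k w), 0)) = snd (gsc_word_map N w (fst (zc k w), 1))" by simp
    hence "(0 - snd (zc k w) + real N ^ k * snd p) / real N ^ k = (1 - snd (zc k w) + real N ^ k * snd p) / real N ^ k"
      by (simp only: map_zc[OF w(1)] snd_conv)
    thus False using Nk N2 by (simp add: divide_cancel_right)
  next
    case y
    have inF: "(s, snd (zc k w)) \<in> F" "(s, snd (zc k w')) \<in> F" if "s \<in> {0,1}" for s
      using c(1,2) all that unfolding corners_def by auto
    have eq: "gsc_word_map N w (s, snd (zc k w)) = gsc_word_map N w' (s, snd (zc k w'))" for s
      using map_zc[OF w(1)] map_zc[OF w(2)] y by simp
    have "gsc_word_map N w (0, snd (zc k w)) = p" "gsc_word_map N w (1, snd (zc k w)) = p"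
      using pt[OF inF(1) inF(2) eq] cr by auto
    hence "fst (gsc_word_map N w (0, snd (zc k w))) = fst (gsc_word_map N w (1, snd (zc k w)))" by simp
    hence "(0 - fst (zc k w) + real N ^ k * fst p) / real N ^ k = (1 - fst (zc k w) + real N ^ k * fst p) / real N ^ k"
      by (simp only: map_zc[OF w(1)] fst_conv)
    thus False using Nk N2 by (simp add: divide_cancel_right)
  qed
qed

lemma two_two:
  assumes "w1 \<in> S (Suc m)" "w2 \<in> S (Suc m)" "w1 \<noteq> w2" "w3 \<in> SY (Suc m)" "w4 \<in> SY (Suc m)" "w3 \<noteq> w4"
  shows False
proof -
  let ?k = "Suc m"
  have V: "w1 \<in> Gamma_vertices D ?k" "w2 \<in> Gamma_vertices D ?k" "w3 \<in> Gamma_vertices D ?k" "w4 \<in> Gamma_vertices D ?k"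
    using assms by (auto simp: S_def SY_def)
  have P: "p \<in> piece N F w1" "p \<in> piece N F w2" "p \<in> piece N F w3" "p \<in> piece N F w4"
    using assms by (auto simp: S_def SY_def)
  have H: "hd w1 \<in> X" "hd w2 \<in> X" "hd w3 \<in> Y" "hd w4 \<in> Y" using assms by (auto simp: S_def SY_def)
  have dXY: "w1 \<noteq> w3" "w1 \<noteq> w4" "w2 \<noteq> w3" "w2 \<noteq> w4" using H XY(2) by auto
  have ti: "(\<exists>n::nat. real N ^ ?k * fst p = real n) \<and> (\<exists>n::nat. real N ^ ?k * snd p = real n)"
    using t_int[OF V(1,2,3) P(1,2,3) assms(3) dXY(1,3)] .
  have C: "zc ?k w1 \<in> corners" "zc ?k w2 \<in> corners" "zc ?k w3 \<in> corners" "zc ?k w4 \<in> corners"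
    using zc_corner[OF _ _ ti] V P by auto
  have zd: "zc ?k w1 \<noteq> zc ?k w2" "zc ?k w1 \<noteq> zc ?k w3" "zc ?k w1 \<noteq> zc ?k w4"
     "zc ?k w2 \<noteq> zc ?k w3" "zc ?k w2 \<noteq> zc ?k w4" "zc ?k w3 \<noteq> zc ?k w4"
    using zc_inj V assms(3,6) dXY by metis+
  have len: "length w1 = ?k" "length w2 = ?k" "length w3 = ?k" "length w4 = ?k" using V by (auto simp: Gamma_vertices_def)
  have all: "corners \<subseteq> F"
  proof -
    have "{zc ?k w1, zc ?k w2, zc ?k w3, zc ?k w4} \<subseteq> F"
      using zc_in[OF len(1) P(1)] zc_in[OF len(2) P(2)] zc_in[OF len(3) P(3)] zc_in[OF len(4) P(4)] by simp
    thus ?thesis using corners_all[OF C zd] by simp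
  qed
  have "adj (zc ?k w3) (zc ?k w1) \<or> adj (zc ?k w3) (zc ?k w2)"
    using corners_adj[OF C(1,2,3) zd(1)] zd by metis
  thus False
  proof
    assume a: "adj (zc ?k w3) (zc ?k w1)"
    show False by (rule adj_contra[OF len(1,3) P(1,3) cross[OF V(1,3) H(1,3)] C(1,3) a all])
  next
    assume a: "adj (zc ?k w3) (zc ?k w2)"
    show False by (rule adj_contra[OF len(2,3) P(2,3) cross[OF V(2,3) H(2,3)] C(2,3) a all])
  qed
qed

end

context gscx begin

definition cc :: "real\<times>real \<Rightarrow> nat\<times>nat" where
  "cc z = (if fst z = 1 then N - 1 else 0, if snd z = 1 then N - 1 else 0)"

lemma corner_cases: "z \<in> corners \<Longrightarrow> (fst z = 0 \<or> fst z = 1) \<and> (snd z = 0 \<or> snd z = 1)"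
  unfolding corners_def mem_Times_iff by auto

lemma cc_in: assumes "z \<in> corners" "z \<in> F" shows "cc z \<in> D"
proof -
  obtain d y where dy: "d \<in> D" "y \<in> F" "z = gsc_map N d y" using assms(2) Feq by blast
  have b: "0 \<le> fst y \<and> fst y \<le> 1 \<and> 0 \<le> snd y \<and> snd y \<le> 1" using Fbox dy(2) by blast
  have dd: "fst d < N" "snd d < N" using dig dy(1) by auto
  have ex: "fst z * real N = fst y + real (fst d)" "snd z * real N = snd y + real (snd d)"
    using dy(3) Npos by (auto simp: gsc_map_def field_simps)
  have "fst d = (if fst z = 1 then N - 1 else 0)"
  proof (cases "fst z = 1")
    case True
    hence "real N = fst y + real (fst d)" using ex by simp
    hence "real (fst d) \<ge> real N - 1" using b by linarith
    hence "fst d \<ge> N - 1" by linarith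
    thus ?thesis using True dd by simp
  next
    case False
    hence "fst z = 0" using corner_cases[OF assms(1)] by simp
    hence "0 = fst y + real (fst d)" using ex by simp
    hence "real (fst d) \<le> 0" using b by linarith
    thus ?thesis using False by simp
  qed
  moreover have "snd d = (if snd z = 1 then N - 1 else 0)"
  proof (cases "snd z = 1")
    case True
    hence "real N = snd y + real (snd d)" using ex by simp
    hence "real (snd d) \<ge> real N - 1" using b by linarith
    hence "snd d \<ge> N - 1" by linarith
    thus ?thesis using True dd by simp
  next
    case False
    hence "snd z = 0" using corner_cases[OF assms(1)] by simp
    hence "0 = snd y + real (snd d)" using ex by simp
    hence "real (snd d) \<le> 0" using b by linarith
    thus ?thesis using False by simp
  qed
  ultimately have "d = cc z" unfolding cc_def by (simp add: prod_eq_iff)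
  thus ?thesis using dy(1) by simp
qed

lemma cc_fix: assumes "z \<in> corners" shows "gsc_map N (cc z) z = z"
proof -
  have N1: "real (N - 1) = real N - 1" using N2 by simp
  show ?thesis using corner_cases[OF assms] Npos N1 unfolding gsc_map_def cc_def
    by (auto simp: field_simps prod_eq_iff)
qed

lemma rep_fix: assumes "z \<in> corners" shows "gsc_word_map N (replicate m (cc z)) z = z"
  by (induction m) (simp_all add: word_map_Nil word_map_Cons cc_fix[OF assms])

lemma rep_piece: assumes "z \<in> corners" "z \<in> F" shows "z \<in> piece N F (replicate m (cc z))"
  using rep_fix[OF assms(1), of m] assms(2) unfolding piece_def by (metis image_eqI)

lemma rep_square:
  assumes q: "q \<in> corners" and y: "y \<in> piece N F (replicate m (cc q))"
  shows "(fst q = 1 \<longrightarrow> fst y \<ge> 1 - 1 / real N ^ m) \<and> (fst q = 0 \<longrightarrow> fst y \<le> 1 / real N ^ m) \<and>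
         (snd q = 1 \<longrightarrow> snd y \<ge> 1 - 1 / real N ^ m) \<and> (snd q = 0 \<longrightarrow> snd y \<le> 1 / real N ^ m)"
  using y
proof (induction m arbitrary: y)
  case 0 thus ?case using Fbox by simp
next
  case (Suc m)
  obtain y' where y': "y' \<in> piece N F (replicate m (cc q))" "y = gsc_map N (cc q) y'"
    using Suc.prems by (auto simp: piece_Cons)
  note ih = Suc.IH[OF y'(1)]
  have N1: "real (N - 1) = real N - 1" using N2 by simp
  have Nm: "real N ^ m > 0" using Npos by simp
  have e1: "1 - 1 / real N ^ Suc m = (1 - 1/real N ^ m + (real N - 1)) / real N" using Npos Nm
    by (simp add: field_simps)
  have e2: "1 / real N ^ Suc m = (1/real N ^ m) / real N" by simp
  show ?case
  proof (intro conjI impI)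
    assume a: "fst q = 1"
    have "1 - 1 / real N ^ Suc m = (1 - 1/real N ^ m + (real N - 1)) / real N" by (rule e1)
    also have "\<dots> \<le> (fst y' + (real N - 1)) / real N" using ih a Npos by (intro divide_right_mono) auto
    also have "\<dots> = fst y" using y'(2) a N1 by (simp add: gsc_map_def cc_def)
    finally show "fst y \<ge> 1 - 1 / real N ^ Suc m" .
  next
    assume a: "fst q = 0"
    have "fst y = fst y' / real N" using y'(2) a by (simp add: gsc_map_def cc_def)
    also have "\<dots> \<le> (1/real N ^ m) / real N" using ih a Npos by (intro divide_right_mono) auto
    also have "\<dots> = 1 / real N ^ Suc m" by simp
    finally show "fst y \<le> 1 / real N ^ Suc m" .
  next
    assume a: "snd q = 1"
    have "1 - 1 / real N ^ Suc m = (1 - 1/real N ^ m + (real N - 1)) / real N" by (rule e1)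
    also have "\<dots> \<le> (snd y' + (real N - 1)) / real N" using ih a Npos by (intro divide_right_mono) auto
    also have "\<dots> = snd y" using y'(2) a N1 by (simp add: gsc_map_def cc_def)
    finally show "snd y \<ge> 1 - 1 / real N ^ Suc m" .
  next
    assume a: "snd q = 0"
    have "snd y = snd y' / real N" using y'(2) a by (simp add: gsc_map_def cc_def)
    also have "\<dots> \<le> (1/real N ^ m) / real N" using ih a Npos by (intro divide_right_mono) auto
    also have "\<dots> = 1 / real N ^ Suc m" by simp
    finally show "snd y \<le> 1 / real N ^ Suc m" .
  qed
qed


lemma sep_aux:
  assumes q: "q \<in> corners" and cD: "cc q \<in> D" and m: "m \<ge> 1" and y: "y \<in> piece N F (replicate m (cc q))"
    and y': "y' \<in> F" and d: "d \<in> D" and eq: "gsc_map N (cc q) y = gsc_map N d y'"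
  shows "d = cc q"
proof -
  have sq: "(fst q = 1 \<longrightarrow> fst y \<ge> 1 - 1 / real N ^ m) \<and> (fst q = 0 \<longrightarrow> fst y \<le> 1 / real N ^ m) \<and>
         (snd q = 1 \<longrightarrow> snd y \<ge> 1 - 1 / real N ^ m) \<and> (snd q = 0 \<longrightarrow> snd y \<le> 1 / real N ^ m)"
    by (rule rep_square[OF q y])
  have Nm: "real N ^ m \<ge> 2"
  proof -
    have "N ^ 1 \<le> N ^ m" using m N2 by (intro power_increasing) auto
    hence "2 \<le> N ^ m" using N2 by simp
    hence "real 2 \<le> real (N ^ m)" by (simp only: of_nat_le_iff)
    thus ?thesis by simp
  qed
  have h: "1 / real N ^ m \<le> 1/2" using Nm N2 by (intro divide_left_mono) auto
  have b': "0 \<le> fst y' \<and> fst y' \<le> 1 \<and> 0 \<le> snd y' \<and> snd y' \<le> 1" using Fbox y' by blast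
  have "set (replicate m (cc q)) \<subseteq> D" using cD by (auto simp: set_replicate_conv_if)
  hence yF: "y \<in> F" using y piece_sub by blast
  hence b: "0 \<le> fst y \<and> fst y \<le> 1 \<and> 0 \<le> snd y \<and> snd y \<le> 1" using Fbox by blast
  have e: "fst y + real (fst (cc q)) = fst y' + real (fst d)" "snd y + real (snd (cc q)) = snd y' + real (snd d)"
    using eq Npos by (auto simp: gsc_map_def divide_cancel_right)
  have dd: "fst d < N" "snd d < N" using dig d by auto
  have N1: "real (N - 1) = real N - 1" using N2 by simp
  have "fst d = fst (cc q)"
  proof (cases "fst q = 1")
    case True
    hence c: "real (fst (cc q)) = real N - 1" using N1 by (simp add: cc_def)
    have "fst y > 0" using sq True h by linarith
    hence "real (fst d) > real N - 2" using e c b' by linarith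
    hence "fst d \<ge> N - 1" by linarith
    thus ?thesis using dd True by (simp add: cc_def)
  next
    case False
    hence f0: "fst q = 0" using corner_cases[OF q] by simp
    hence c: "real (fst (cc q)) = 0" using False by (simp add: cc_def)
    have "fst y < 1" using sq f0 h by linarith
    hence "real (fst d) < 1" using e c b' by linarith
    thus ?thesis using False by (simp add: cc_def)
  qed
  moreover have "snd d = snd (cc q)"
  proof (cases "snd q = 1")
    case True
    hence c: "real (snd (cc q)) = real N - 1" using N1 by (simp add: cc_def)
    have "snd y > 0" using sq True h by linarith
    hence "real (snd d) > real N - 2" using e c b' by linarith
    hence "snd d \<ge> N - 1" by linarith
    thus ?thesis using dd True by (simp add: cc_def)
  next
    case False
    hence f0: "snd q = 0" using corner_cases[OF q] by simp
    hence c: "real (snd (cc q)) = 0" using False by (simp add: cc_def)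
    have "snd y < 1" using sq f0 h by linarith
    hence "real (snd d) < 1" using e c b' by linarith
    thus ?thesis using False by (simp add: cc_def)
  qed
  ultimately show ?thesis by (simp add: prod_eq_iff)
qed

definition Hs :: "real\<times>real \<Rightarrow> (real\<times>real) set" where
  "Hs q = (\<Union>d\<in>D - {cc q}. gsc_map N d ` F)"

definition Gs :: "real\<times>real \<Rightarrow> nat \<Rightarrow> (real\<times>real) set" where
  "Gs q m = (\<Union>u\<in>Gamma_vertices D m - {replicate m (cc q)}. piece N F u)"

lemma Gs_1: "Gs q 1 = Hs q"
proof (rule set_eqI, rule iffI)
  fix x assume "x \<in> Gs q 1"
  then obtain u where u: "u \<in> Gamma_vertices D 1" "u \<noteq> [cc q]" "x \<in> piece N F u" unfolding Gs_def by auto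
  then obtain d where "u = [d]" "d \<in> D" by (cases u) (auto simp: Gamma_vertices_def)
  thus "x \<in> Hs q" using u unfolding Hs_def by (auto simp: piece_Cons)
next
  fix x assume "x \<in> Hs q"
  then obtain d where d: "d \<in> D" "d \<noteq> cc q" "x \<in> gsc_map N d ` F" unfolding Hs_def by blast
  have "[d] \<in> Gamma_vertices D 1 - {replicate 1 (cc q)}" using d by (auto simp: Gamma_vertices_def)
  moreover have "x \<in> piece N F [d]" using d by (simp add: piece_Cons)
  ultimately show "x \<in> Gs q 1" unfolding Gs_def by blast
qed

lemma Gs_Suc: assumes c: "cc q \<in> D" shows "Gs q (Suc m) = Hs q \<union> gsc_map N (cc q) ` Gs q m"
proof (rule set_eqI, rule iffI)
  fix x assume "x \<in> Gs q (Suc m)"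
  then obtain w where w: "w \<in> Gamma_vertices D (Suc m)" "w \<noteq> replicate (Suc m) (cc q)" "x \<in> piece N F w"
    unfolding Gs_def by auto
  then obtain d u where du: "w = d#u" "d \<in> D" "u \<in> Gamma_vertices D m" by (cases w) (auto simp: Gamma_vertices_def)
  show "x \<in> Hs q \<union> gsc_map N (cc q) ` Gs q m"
  proof (cases "d = cc q")
    case True
    hence "u \<noteq> replicate m (cc q)" using w(2) du(1) by auto
    hence "piece N F u \<subseteq> Gs q m" using du(3) unfolding Gs_def by blast
    thus ?thesis using w(3) du(1) True by (auto simp: piece_Cons)
  next
    case False
    have "piece N F u \<subseteq> F" using piece_sub du(3) by (auto simp: Gamma_vertices_def)
    hence "x \<in> gsc_map N d ` F" using w(3) du(1) by (auto simp: piece_Cons)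
    thus ?thesis using False du(2) unfolding Hs_def by blast
  qed
next
  fix x assume "x \<in> Hs q \<union> gsc_map N (cc q) ` Gs q m"
  thus "x \<in> Gs q (Suc m)"
  proof
    assume "x \<in> Hs q"
    then obtain d where d: "d \<in> D" "d \<noteq> cc q" "x \<in> gsc_map N d ` F" unfolding Hs_def by blast
    then obtain u where u: "u \<in> Gamma_vertices D m" "x \<in> gsc_map N d ` piece N F u"
      using F_union[of m] by (metis (no_types, lifting) UN_E image_UN)
    have "d#u \<in> Gamma_vertices D (Suc m) - {replicate (Suc m) (cc q)}" using d u by simp
    moreover have "x \<in> piece N F (d#u)" using u by (simp add: piece_Cons)
    ultimately show ?thesis unfolding Gs_def by blast
  next
    assume "x \<in> gsc_map N (cc q) ` Gs q m"
    then obtain u where u: "u \<in> Gamma_vertices D m" "u \<noteq> replicate m (cc q)" "x \<in> gsc_map N (cc q) ` piece N F u"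
      unfolding Gs_def by blast
    have "cc q#u \<in> Gamma_vertices D (Suc m) - {replicate (Suc m) (cc q)}" using c u by simp
    moreover have "x \<in> piece N F (cc q#u)" using u by (simp add: piece_Cons)
    ultimately show ?thesis unfolding Gs_def by blast
  qed
qed

lemma CL:
  assumes q: "q \<in> corners" "q \<in> F" and Hc: "connected (Hs q)"
  shows "m \<ge> 1 \<Longrightarrow> connected (Gs q m)"
proof (induction m)
  case 0 thus ?case by simp
next
  case (Suc m)
  have c: "cc q \<in> D" using cc_in q by blast
  show ?case
  proof (cases "m = 0")
    case True thus ?thesis using Gs_1 Hc by simp
  next
    case False
    hence m1: "m \<ge> 1" by simp
    have IH: "connected (Gs q m)" using Suc.IH m1 by simp
    have c1: "connected (gsc_map N (cc q) ` Gs q m)"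
      by (rule connected_continuous_image[OF continuous_on_subset[OF gsc_map_cont] IH]) simp
    have Feq2: "F = gsc_map N (cc q) ` F \<union> Hs q" using c Feq unfolding Hs_def by blast
    have cl1: "closed (gsc_map N (cc q) ` F)"
      by (rule compact_imp_closed, rule compact_continuous_image[OF continuous_on_subset[OF gsc_map_cont] Fcpt]) simp
    have cl2: "closed (Hs q)" unfolding Hs_def
      by (rule closed_UN) (use finD in \<open>auto intro!: compact_imp_closed compact_continuous_image continuous_on_subset[OF gsc_map_cont] Fcpt\<close>)
    have ne1: "gsc_map N (cc q) ` F \<noteq> {}" using Fne by simp
    have "D - {cc q} \<noteq> {}"
    proof
      assume "D - {cc q} = {}"
      hence "D \<subseteq> {cc q}" by blast
      hence "card D \<le> card {cc q}" by (intro card_mono) auto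
      thus False using cardD by simp
    qed
    hence ne2: "Hs q \<noteq> {}" using Fne unfolding Hs_def by blast
    have "gsc_map N (cc q) ` F \<inter> Hs q \<noteq> {}"
    proof
      assume dis: "gsc_map N (cc q) ` F \<inter> Hs q = {}"
      have "\<not> connected F"
        unfolding connected_closed
        by (rule notI, erule notE, rule exI[of _ "gsc_map N (cc q) ` F"], rule exI[of _ "Hs q"])
           (use cl1 cl2 Feq2 dis ne1 ne2 in auto)
      thus False using Fconn by simp
    qed
    then obtain x where x1: "x \<in> gsc_map N (cc q) ` F" and x2: "x \<in> Hs q" by blast
    obtain y where y: "y \<in> F" "x = gsc_map N (cc q) y" using x1 by blast
    obtain d y' where dy': "d \<in> D" "d \<noteq> cc q" "y' \<in> F" "x = gsc_map N d y'" using x2 unfolding Hs_def by blast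
    obtain u where u: "u \<in> Gamma_vertices D m" "y \<in> piece N F u" using y(1) F_union[of m] by blast
    have "u \<noteq> replicate m (cc q)"
    proof
      assume "u = replicate m (cc q)"
      hence "d = cc q" using sep_aux[OF q(1) c m1 _ dy'(3) dy'(1)] u(2) y(2) dy'(4) by simp
      thus False using dy'(2) by simp
    qed
    hence "y \<in> Gs q m" using u unfolding Gs_def by blast
    hence "x \<in> Hs q \<inter> gsc_map N (cc q) ` Gs q m" using x2 y(2) by blast
    hence "Hs q \<inter> gsc_map N (cc q) ` Gs q m \<noteq> {}" by blast
    thus ?thesis using Gs_Suc[OF c] connected_Un[OF Hc c1] by simp
  qed
qed

lemma block_minus_conn:
  assumes q: "q \<in> corners" "q \<in> F" and Hc: "connected (Hs q)" and k: "k \<ge> 2"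
  shows "\<forall>x\<in>(\<lambda>u. a#u) ` Gamma_vertices D (k-1) - {a # replicate (k-1) (cc q)}.
         \<forall>y\<in>(\<lambda>u. a#u) ` Gamma_vertices D (k-1) - {a # replicate (k-1) (cc q)}.
         graph_reach ((\<lambda>u. a#u) ` Gamma_vertices D (k-1) - {a # replicate (k-1) (cc q)}) (Gamma_edge N F) x y"
proof (rule conn_words)
  show "finite ((\<lambda>u. a#u) ` Gamma_vertices D (k-1) - {a # replicate (k-1) (cc q)})"
    using Gv_finite[OF finD] by simp
  have eq: "(\<Union>w\<in>(\<lambda>u. a#u) ` Gamma_vertices D (k-1) - {a # replicate (k-1) (cc q)}. piece N F w)
          = gsc_map N a ` Gs q (k-1)"
  proof -
    have "(\<lambda>u. a#u) ` Gamma_vertices D (k-1) - {a # replicate (k-1) (cc q)}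
          = (\<lambda>u. a#u) ` (Gamma_vertices D (k-1) - {replicate (k-1) (cc q)})" by auto
    thus ?thesis unfolding Gs_def by (simp add: piece_Cons image_UN)
  qed
  have "connected (Gs q (k-1))" using CL[OF q Hc] k by simp
  hence "connected (gsc_map N a ` Gs q (k-1))"
    using connected_continuous_image[OF continuous_on_subset[OF gsc_map_cont subset_UNIV]] by blast
  thus "connected (\<Union>w\<in>(\<lambda>u. a#u) ` Gamma_vertices D (k-1) - {a # replicate (k-1) (cc q)}. piece N F w)"
    using eq by simp
qed

end

lemma range_aux:
  fixes g :: "real\<times>real \<Rightarrow> real"
  assumes cpt: "compact (g ` F)" and ne: "F \<noteq> {}" and N: "N \<ge> (2::nat)"
    and rec: "\<And>z. z \<in> F \<Longrightarrow> \<exists>y\<in>F. \<exists>c. lo \<le> c \<and> c \<le> hi \<and> g z = (g y + c) / real N"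
  shows "\<And>z. z \<in> F \<Longrightarrow> lo / (real N - 1) \<le> g z \<and> g z \<le> hi / (real N - 1)"
proof -
  have ne2: "g ` F \<noteq> {}" using ne by auto
  obtain s where s: "s \<in> g ` F" "\<And>t. t \<in> g ` F \<Longrightarrow> t \<le> s"
    using compact_attains_sup[OF cpt ne2] by blast
  obtain i where i: "i \<in> g ` F" "\<And>t. t \<in> g ` F \<Longrightarrow> i \<le> t"
    using compact_attains_inf[OF cpt ne2] by blast
  have Np: "real N > 0" "real N - 1 > 0" using N by auto
  have s1: "s \<le> hi / (real N - 1)"
  proof -
    obtain z where z: "z \<in> F" "s = g z" using s by auto
    obtain y c where yc: "y \<in> F" "lo \<le> c" "c \<le> hi" "g z = (g y + c)/real N" using rec[OF z(1)] by blast
    have gy: "g y \<le> s" using s yc by auto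
    have "s * real N = g y + c" using z yc Np by (simp add: field_simps)
    hence "s * (real N - 1) \<le> hi" using gy yc by (simp add: algebra_simps)
    thus ?thesis using Np by (simp add: field_simps)
  qed
  have i1: "lo / (real N - 1) \<le> i"
  proof -
    obtain z where z: "z \<in> F" "i = g z" using i by auto
    obtain y c where yc: "y \<in> F" "lo \<le> c" "c \<le> hi" "g z = (g y + c)/real N" using rec[OF z(1)] by blast
    have gy: "i \<le> g y" using i yc by auto
    have "i * real N = g y + c" using z yc Np by (simp add: field_simps)
    hence "i * (real N - 1) \<ge> lo" using gy yc by (simp add: algebra_simps)
    thus ?thesis using Np by (simp add: field_simps)
  qed
  fix z assume "z \<in> F"
  thus "lo / (real N - 1) \<le> g z \<and> g z \<le> hi / (real N - 1)" using s i s1 i1 by force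
qed

lemma coord1:
  fixes y y' :: real
  assumes "y + real A = y' + real B" "0 \<le> y" "y \<le> 1" "0 \<le> y'" "y' \<le> 1" "A \<noteq> B"
  shows "(y = 1 \<and> y' = 0 \<and> B = A + 1) \<or> (y = 0 \<and> y' = 1 \<and> A = B + 1)"
proof (cases "A < B")
  case True
  hence "real A + 1 \<le> real B" by (metis of_nat_1 of_nat_add of_nat_le_iff Suc_eq_plus1 Suc_leI)
  note h = this
  have "y = 1" using h assms by linarith
  moreover have "y' = 0" using h assms by linarith
  moreover have "real B = real A + 1" using h assms by linarith
  ultimately show ?thesis by (metis of_nat_1 of_nat_add of_nat_eq_iff)
next
  case False
  hence "B < A" using assms(6) by simp
  hence "real B + 1 \<le> real A" by (metis of_nat_1 of_nat_add of_nat_le_iff Suc_eq_plus1 Suc_leI)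
  note h = this
  have "y = 0" using h assms by linarith
  moreover have "y' = 1" using h assms by linarith
  moreover have "real A = real B + 1" using h assms by linarith
  ultimately show ?thesis by (metis of_nat_1 of_nat_add of_nat_eq_iff)
qed

context gscx begin

lemma map_eq_coords:
  assumes "gsc_map N d y = gsc_map N d' y'"
  shows "fst y + real (fst d) = fst y' + real (fst d')" "snd y + real (snd d) = snd y' + real (snd d')"
  using assms Npos by (auto simp: gsc_map_def divide_cancel_right)

lemma fst_range:
  assumes "\<forall>d\<in>D. lo \<le> real (fst d) \<and> real (fst d) \<le> hi" "z \<in> F"
  shows "lo / (real N - 1) \<le> fst z \<and> fst z \<le> hi / (real N - 1)"
proof (rule range_aux[of fst F N lo hi, OF _ Fne N2 _ assms(2)])
  show "compact (fst ` F)" by (intro compact_continuous_image continuous_intros Fcpt)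
  fix z assume "z \<in> F"
  then obtain y i where yi: "y \<in> F" "i \<in> D" "z = gsc_map N i y" using Feq by blast
  show "\<exists>y\<in>F. \<exists>c. lo \<le> c \<and> c \<le> hi \<and> fst z = (fst y + c) / real N"
    using yi assms(1) by (intro bexI[OF _ yi(1)] exI[of _ "real (fst i)"]) (auto simp: gsc_map_def)
qed

lemma snd_range:
  assumes "\<forall>d\<in>D. lo \<le> real (snd d) \<and> real (snd d) \<le> hi" "z \<in> F"
  shows "lo / (real N - 1) \<le> snd z \<and> snd z \<le> hi / (real N - 1)"
proof (rule range_aux[of snd F N lo hi, OF _ Fne N2 _ assms(2)])
  show "compact (snd ` F)" by (intro compact_continuous_image continuous_intros Fcpt)
  fix z assume "z \<in> F"
  then obtain y i where yi: "y \<in> F" "i \<in> D" "z = gsc_map N i y" using Feq by blast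
  show "\<exists>y\<in>F. \<exists>c. lo \<le> c \<and> c \<le> hi \<and> snd z = (snd y + c) / real N"
    using yi assms(1) by (intro bexI[OF _ yi(1)] exI[of _ "real (snd i)"]) (auto simp: gsc_map_def)
qed

lemma Hs_single:
  assumes "D - {cc q} = {d}" shows "connected (Hs q)"
proof -
  have "Hs q = gsc_map N d ` F" unfolding Hs_def using assms by simp
  thus ?thesis using connected_continuous_image[OF continuous_on_subset[OF gsc_map_cont subset_UNIV] Fconn] by simp
qed

end

context fragx begin

lemma two_case:
  assumes X: "X = {a}" and Y: "Y = {b}"
  shows "\<exists>q. q \<in> corners \<and> q \<in> F \<and> p = gsc_map N a q \<and> connected (Hs q)"
proof -
  have Dab: "D = {a,b}" using XY X Y by auto
  have ab: "a \<noteq> b" using XY(2) X Y by auto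
  have "p \<in> gsc_map N a ` F" "p \<in> gsc_map N b ` F" using sing X Y by auto
  then obtain y y' where y: "y \<in> F" "p = gsc_map N a y" and y': "y' \<in> F" "p = gsc_map N b y'" by blast
  have e: "fst y + real (fst a) = fst y' + real (fst b)" "snd y + real (snd a) = snd y' + real (snd b)"
    using map_eq_coords[of a y b y'] y y' by auto
  have bx: "0 \<le> fst y \<and> fst y \<le> 1 \<and> 0 \<le> snd y \<and> snd y \<le> 1" using Fbox y(1) by blast
  have bx': "0 \<le> fst y' \<and> fst y' \<le> 1 \<and> 0 \<le> snd y' \<and> snd y' \<le> 1" using Fbox y'(1) by blast
  have ad: "fst a < N" "snd a < N" using dig Dab by auto
  have yc: "y \<in> corners"
  proof -
    have fx: "fst y = 0 \<or> fst y = 1"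
    proof (cases "fst a = fst b")
      case False thus ?thesis using coord1[OF e(1)] bx bx' by blast
    next
      case True
      hence sy: "snd a \<noteq> snd b" using ab by (auto simp: prod_eq_iff)
      have c1: "(snd y = 1 \<and> snd y' = 0 \<and> snd b = snd a + 1) \<or> (snd y = 0 \<and> snd y' = 1 \<and> snd a = snd b + 1)"
        using coord1[OF e(2)] bx bx' sy by blast
      define lo where "lo = real (min (snd a) (snd b))"
      have rng: "\<forall>d\<in>D. lo \<le> real (snd d) \<and> real (snd d) \<le> lo + 1" using c1 Dab lo_def by auto
      have r1: "lo / (real N - 1) \<le> snd y \<and> snd y \<le> (lo + 1) / (real N - 1)" using snd_range[OF rng y(1)] .
      have r2: "lo / (real N - 1) \<le> snd y' \<and> snd y' \<le> (lo + 1) / (real N - 1)" using snd_range[OF rng y'(1)] .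
      have "1 \<le> (lo + 1) / (real N - 1) - lo / (real N - 1)" using r1 r2 c1 by auto
      hence "1 \<le> 1 / (real N - 1)" by (simp add: diff_divide_distrib[symmetric])
      moreover have pos: "real N - 1 > 0" using N2 by simp
      ultimately have "real N - 1 \<le> 1" by (simp add: le_divide_eq)
      hence N2': "N = 2" using N2 by linarith
      have rngx: "\<forall>d\<in>D. real (fst a) \<le> real (fst d) \<and> real (fst d) \<le> real (fst a)" using True Dab by auto
      have "fst y = real (fst a)" using fst_range[OF rngx y(1)] N2' by simp
      moreover have "fst a \<le> 1" using ad N2' by simp
      ultimately show ?thesis by (metis le_Suc_eq le_zero_eq of_nat_0 of_nat_1 One_nat_def)
    qed
    have fy: "snd y = 0 \<or> snd y = 1"
    proof (cases "snd a = snd b")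
      case False thus ?thesis using coord1[OF e(2)] bx bx' by blast
    next
      case True
      hence sx: "fst a \<noteq> fst b" using ab by (auto simp: prod_eq_iff)
      have c1: "(fst y = 1 \<and> fst y' = 0 \<and> fst b = fst a + 1) \<or> (fst y = 0 \<and> fst y' = 1 \<and> fst a = fst b + 1)"
        using coord1[OF e(1)] bx bx' sx by blast
      define lo where "lo = real (min (fst a) (fst b))"
      have rng: "\<forall>d\<in>D. lo \<le> real (fst d) \<and> real (fst d) \<le> lo + 1" using c1 Dab lo_def by auto
      have r1: "lo / (real N - 1) \<le> fst y \<and> fst y \<le> (lo + 1) / (real N - 1)" using fst_range[OF rng y(1)] .
      have r2: "lo / (real N - 1) \<le> fst y' \<and> fst y' \<le> (lo + 1) / (real N - 1)" using fst_range[OF rng y'(1)] .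
      have "1 \<le> (lo + 1) / (real N - 1) - lo / (real N - 1)" using r1 r2 c1 by auto
      hence "1 \<le> 1 / (real N - 1)" by (simp add: diff_divide_distrib[symmetric])
      moreover have pos: "real N - 1 > 0" using N2 by simp
      ultimately have "real N - 1 \<le> 1" by (simp add: le_divide_eq)
      hence N2': "N = 2" using N2 by linarith
      have rngy: "\<forall>d\<in>D. real (snd a) \<le> real (snd d) \<and> real (snd d) \<le> real (snd a)" using True Dab by auto
      have "snd y = real (snd a)" using snd_range[OF rngy y(1)] N2' by simp
      moreover have "snd a \<le> 1" using ad N2' by simp
      ultimately show ?thesis by (metis le_Suc_eq le_zero_eq of_nat_0 of_nat_1 One_nat_def)
    qed
    show ?thesis unfolding corners_def mem_Times_iff using fx fy by auto
  qed
  have "cc y \<in> D" using cc_in yc y(1) by blast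
  hence "cc y = a \<or> cc y = b" using Dab by simp
  moreover have "{a,b} - {a} = {b}" using ab by blast
  moreover have "{a,b} - {b} = {a}" using ab by blast
  ultimately have "D - {cc y} = {b} \<or> D - {cc y} = {a}" using Dab by metis
  hence "connected (Hs y)" using Hs_single by blast
  thus ?thesis using yc y by blast
qed

end

context gscx begin

lemma map_closed: "closed (gsc_map N d ` F)"
  by (rule compact_imp_closed, rule compact_continuous_image[OF continuous_on_subset[OF gsc_map_cont] Fcpt]) simp

lemma map_connected: "connected (gsc_map N d ` F)"
  by (rule connected_continuous_image[OF continuous_on_subset[OF gsc_map_cont] Fconn]) simp

lemma conn_piece_side:
  assumes "connected P" "P \<subseteq> A \<union> B" "closed A" "closed B" "A \<inter> B \<inter> P = {}"
  shows "P \<subseteq> A \<or> P \<subseteq> B"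
proof -
  have "\<not> (A \<inter> P \<noteq> {} \<and> B \<inter> P \<noteq> {})" using assms unfolding connected_closed by blast
  thus ?thesis using assms(2) by blast
qed

lemma Hs_conn_clique:
  assumes cD: "cc q \<in> D"
    and cl: "\<And>d1 d2. d1 \<in> D - {cc q} \<Longrightarrow> d2 \<in> D - {cc q} \<Longrightarrow> d1 \<noteq> d2 \<Longrightarrow>
       gsc_map N (cc q) ` F \<inter> gsc_map N d1 ` F \<noteq> {} \<Longrightarrow> gsc_map N (cc q) ` F \<inter> gsc_map N d2 ` F \<noteq> {} \<Longrightarrow>
       gsc_map N d1 ` F \<inter> gsc_map N d2 ` F \<noteq> {}"
  shows "connected (Hs q)"
proof (rule ccontr)
  assume nc: "\<not> connected (Hs q)"
  then obtain A B where AB: "closed A" "closed B" "Hs q \<subseteq> A \<union> B" "A \<inter> B \<inter> Hs q = {}" "A \<inter> Hs q \<noteq> {}" "B \<inter> Hs q \<noteq> {}"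
    unfolding connected_closed by blast
  let ?P = "\<lambda>d. gsc_map N d ` F"
  let ?c = "cc q"
  have side: "?P d \<subseteq> A \<or> ?P d \<subseteq> B" if "d \<in> D - {?c}" for d
  proof (rule conn_piece_side[OF map_connected _ AB(1,2)])
    show "?P d \<subseteq> A \<union> B" using that AB(3) unfolding Hs_def by blast
    show "A \<inter> B \<inter> ?P d = {}" using that AB(4) unfolding Hs_def by blast
  qed
  define DA where "DA = {d \<in> D - {?c}. ?P d \<subseteq> A}"
  define DB where "DB = {d \<in> D - {?c}. \<not> ?P d \<subseteq> A}"
  have DBB: "?P d \<subseteq> B" if "d \<in> DB" for d using side that DB_def by blast
  define E1 where "E1 = (\<Union>d\<in>DA. ?P d)"
  define E2 where "E2 = (\<Union>d\<in>DB. ?P d)"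
  have finDA: "finite DA" "finite DB" using finD DA_def DB_def by auto
  have clE: "closed E1" "closed E2" unfolding E1_def E2_def using finDA map_closed by (auto intro!: closed_UN)
  have HsE: "Hs q = E1 \<union> E2" unfolding Hs_def E1_def E2_def DA_def DB_def by blast
  have E12: "E1 \<inter> E2 = {}"
  proof -
    have "E1 \<subseteq> A" unfolding E1_def DA_def by blast
    moreover have "E2 \<subseteq> B" unfolding E2_def using DBB by blast
    ultimately show ?thesis using AB(4) HsE by blast
  qed
  have E1ne: "E1 \<noteq> {}"
  proof -
    obtain x where x: "x \<in> A" "x \<in> Hs q" using AB(5) by blast
    then obtain d where d: "d \<in> D - {?c}" "x \<in> ?P d" unfolding Hs_def by blast
    have "\<not> ?P d \<subseteq> B" using x d AB(4) unfolding Hs_def by blast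
    hence "d \<in> DA" using side[OF d(1)] d(1) DA_def by blast
    thus ?thesis using d(2) E1_def by blast
  qed
  have E2ne: "E2 \<noteq> {}"
  proof -
    obtain x where x: "x \<in> B" "x \<in> Hs q" using AB(6) by blast
    then obtain d where d: "d \<in> D - {?c}" "x \<in> ?P d" unfolding Hs_def by blast
    have "\<not> ?P d \<subseteq> A" using x d AB(4) unfolding Hs_def by blast
    hence "d \<in> DB" using d(1) DB_def by blast
    thus ?thesis using d(2) E2_def by blast
  qed
  have Fe: "F = ?P ?c \<union> E1 \<union> E2" using Feq cD HsE unfolding Hs_def by blast
  have Pcne: "?P ?c \<noteq> {}" using Fne by simp
  have m1: "?P ?c \<inter> E1 \<noteq> {}"
  proof
    assume dis: "?P ?c \<inter> E1 = {}"
    have c1: "closed E1" using clE by simp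
    have c2: "closed (?P ?c \<union> E2)" using clE map_closed by (intro closed_Un) auto
    have s1: "F \<subseteq> E1 \<union> (?P ?c \<union> E2)" using Fe by blast
    have s2: "E1 \<inter> (?P ?c \<union> E2) \<inter> F = {}" using dis E12 by blast
    have s3: "E1 \<inter> F \<noteq> {}" using E1ne Fe by blast
    have s4: "(?P ?c \<union> E2) \<inter> F \<noteq> {}" using Pcne Fe by blast
    show False using Fconn[unfolded connected_closed] c1 c2 s1 s2 s3 s4 by blast
  qed
  have m2: "?P ?c \<inter> E2 \<noteq> {}"
  proof
    assume dis: "?P ?c \<inter> E2 = {}"
    have c1: "closed E2" using clE by simp
    have c2: "closed (?P ?c \<union> E1)" using clE map_closed by (intro closed_Un) auto
    have s1: "F \<subseteq> E2 \<union> (?P ?c \<union> E1)" using Fe by blast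
    have s2: "E2 \<inter> (?P ?c \<union> E1) \<inter> F = {}" using dis E12 by blast
    have s3: "E2 \<inter> F \<noteq> {}" using E2ne Fe by blast
    have s4: "(?P ?c \<union> E1) \<inter> F \<noteq> {}" using Pcne Fe by blast
    show False using Fconn[unfolded connected_closed] c1 c2 s1 s2 s3 s4 by blast
  qed
  obtain d1 where d1: "d1 \<in> DA" "?P ?c \<inter> ?P d1 \<noteq> {}" using m1 E1_def by blast
  obtain d2 where d2: "d2 \<in> DB" "?P ?c \<inter> ?P d2 \<noteq> {}" using m2 E2_def by blast
  have ne: "d1 \<noteq> d2" using d1(1) d2(1) DA_def DB_def by blast
  have "?P d1 \<inter> ?P d2 \<noteq> {}" using cl[OF _ _ ne d1(2) d2(2)] d1(1) d2(1) DA_def DB_def by blast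
  moreover have "?P d1 \<subseteq> A" using d1(1) DA_def by blast
  moreover have "?P d2 \<subseteq> B" using DBB d2(1) by blast
  moreover have "?P d1 \<subseteq> Hs q" using d1(1) DA_def unfolding Hs_def by blast
  ultimately show False using AB(4) by blast
qed

end

context gscx begin

definition ccx :: "real \<Rightarrow> nat" where "ccx r = (if r = 1 then N - 1 else 0)"
definition inw :: "real \<Rightarrow> nat" where "inw r = (if r = 1 then N - 2 else 1)"

lemma cc_ccx: "cc q = (ccx (fst q), ccx (snd q))" by (simp add: cc_def ccx_def)

lemma r01: "r \<in> {0,1} \<Longrightarrow> r = 0 \<or> r = (1::real)" by auto

lemma id1: "r = 0 \<or> r = 1 \<Longrightarrow> r + real (inw r) = 1 - r + real (ccx r)"
  using N2 by (auto simp: inw_def ccx_def of_nat_diff)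

lemma id2: "r = 0 \<or> r = 1 \<Longrightarrow> real (ccx r) + r = real N * r"
  using N2 by (auto simp: ccx_def of_nat_diff)

lemma id3: "r = 0 \<or> r = 1 \<Longrightarrow> real (ccx (1 - r)) + (1 - r) = real N * (1 - r)"
  using N2 by (auto simp: ccx_def of_nat_diff)

lemma id4: "r = 0 \<or> r = 1 \<Longrightarrow> real (inw r) + r \<noteq> real N * r"
  using N2 by (auto simp: inw_def of_nat_diff)

lemma nb_coord:
  fixes y y' :: real
  assumes r: "r = 0 \<or> r = 1" and b: "0 \<le> y" "y \<le> 1" "0 \<le> y'" "y' \<le> 1" and dj: "dj < N"
    and e: "y + real (ccx r) = y' + real dj"
  shows "(dj = ccx r \<and> y = y') \<or> (dj = inw r \<and> y = 1 - r \<and> y' = r)"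
  using r
proof
  assume r0: "r = 0"
  hence e': "y = y' + real dj" using e by (simp add: ccx_def)
  show ?thesis
  proof (cases "dj = 0")
    case True thus ?thesis using e' r0 by (simp add: ccx_def)
  next
    case False
    hence "real dj \<ge> 1" by simp
    hence "y = 1" "y' = 0" "real dj = 1" using e' b by linarith+
    thus ?thesis using r0 by (simp add: inw_def)
  qed
next
  assume r1: "r = 1"
  have N1: "real (N - 1) = real N - 1" using N2 by simp
  hence e': "y + real N - 1 = y' + real dj" using e r1 by (simp add: ccx_def)
  show ?thesis
  proof (cases "dj = N - 1")
    case True thus ?thesis using e' r1 N1 by (simp add: ccx_def)
  next
    case False
    hence "dj \<le> N - 2" using dj by linarith
    hence "real dj \<le> real N - 2" using N2 by (simp add: of_nat_diff)
    hence "y = 0" "y' = 1" "real dj = real N - 2" using e' b by linarith+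
    moreover have "dj = N - 2" using \<open>real dj = real N - 2\<close> N2 by (simp add: of_nat_diff)
    ultimately show ?thesis using r1 by (simp add: inw_def)
  qed
qed

definition dX where "dX q = (inw (fst q), ccx (snd q))"
definition dY where "dY q = (ccx (fst q), inw (snd q))"
definition dXY where "dXY q = (inw (fst q), inw (snd q))"

lemma qcoords: "q \<in> corners \<Longrightarrow> (fst q = 0 \<or> fst q = 1) \<and> (snd q = 0 \<or> snd q = 1)"
  by (rule corner_cases)

lemma nb_types:
  assumes q: "q \<in> corners" and d: "d \<in> D" "d \<noteq> cc q"
    and i: "gsc_map N (cc q) ` F \<inter> gsc_map N d ` F \<noteq> {}"
  shows "d = dX q \<or> d = dY q \<or> (d = dXY q \<and> (1 - fst q, 1 - snd q) \<in> F)"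
proof -
  obtain y y' where y: "y \<in> F" "y' \<in> F" "gsc_map N (cc q) y = gsc_map N d y'" using i by blast
  have e: "fst y + real (fst (cc q)) = fst y' + real (fst d)" "snd y + real (snd (cc q)) = snd y' + real (snd d)"
    using map_eq_coords[OF y(3)] by auto
  have b: "0 \<le> fst y \<and> fst y \<le> 1 \<and> 0 \<le> snd y \<and> snd y \<le> 1" using Fbox y(1) by blast
  have b': "0 \<le> fst y' \<and> fst y' \<le> 1 \<and> 0 \<le> snd y' \<and> snd y' \<le> 1" using Fbox y(2) by blast
  have dd: "fst d < N" "snd d < N" using dig d(1) by auto
  have qc: "(fst q = 0 \<or> fst q = 1)" "(snd q = 0 \<or> snd q = 1)" using qcoords[OF q] by auto
  have cx: "(fst d = ccx (fst q) \<and> fst y = fst y') \<or> (fst d = inw (fst q) \<and> fst y = 1 - fst q \<and> fst y' = fst q)"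
    by (rule nb_coord[OF qc(1)]) (use b b' dd e cc_ccx in auto)
  have cy: "(snd d = ccx (snd q) \<and> snd y = snd y') \<or> (snd d = inw (snd q) \<and> snd y = 1 - snd q \<and> snd y' = snd q)"
    by (rule nb_coord[OF qc(2)]) (use b b' dd e cc_ccx in auto)
  have "\<not> (fst d = ccx (fst q) \<and> snd d = ccx (snd q))" using d(2) cc_ccx by (auto simp: prod_eq_iff)
  hence "(fst d = inw (fst q) \<and> snd d = ccx (snd q)) \<or> (fst d = ccx (fst q) \<and> snd d = inw (snd q))
      \<or> (fst d = inw (fst q) \<and> snd d = inw (snd q) \<and> y = (1 - fst q, 1 - snd q))"
    using cx cy by (auto simp: prod_eq_iff)
  thus ?thesis
  proof (elim disjE)
    assume "fst d = inw (fst q) \<and> snd d = ccx (snd q)"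
    thus ?thesis unfolding dX_def by (simp add: prod_eq_iff)
  next
    assume "fst d = ccx (fst q) \<and> snd d = inw (snd q)"
    thus ?thesis unfolding dY_def by (simp add: prod_eq_iff)
  next
    assume h: "fst d = inw (fst q) \<and> snd d = inw (snd q) \<and> y = (1 - fst q, 1 - snd q)"
    hence "d = dXY q" unfolding dXY_def by (simp add: prod_eq_iff)
    moreover have "(1 - fst q, 1 - snd q) \<in> F" using h y(1) by simp
    ultimately show ?thesis by simp
  qed
qed

lemma pt_common:
  assumes "z \<in> F" "z' \<in> F" "fst z + real (fst d) = fst z' + real (fst d')" "snd z + real (snd d) = snd z' + real (snd d')"
  shows "gsc_map N d ` F \<inter> gsc_map N d' ` F \<noteq> {}"
proof -
  have "gsc_map N d z = gsc_map N d' z'" using assms(3,4) by (simp add: gsc_map_def)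
  thus ?thesis using assms(1,2) by blast
qed

lemma pair_XY:
  assumes q: "q \<in> corners" and "(fst q, 1 - snd q) \<in> F" "(1 - fst q, snd q) \<in> F"
  shows "gsc_map N (dX q) ` F \<inter> gsc_map N (dY q) ` F \<noteq> {}"
  using qcoords[OF q] by (intro pt_common[OF assms(2,3)]) (auto simp: dX_def dY_def id1)

lemma pair_YXY:
  assumes q: "q \<in> corners" and "(1 - fst q, 1 - snd q) \<in> F" "(fst q, 1 - snd q) \<in> F"
  shows "gsc_map N (dY q) ` F \<inter> gsc_map N (dXY q) ` F \<noteq> {}"
  using qcoords[OF q] by (intro pt_common[OF assms(2,3)]) (auto simp: dXY_def dY_def id1)

lemma pair_XXY:
  assumes q: "q \<in> corners" and "(1 - fst q, 1 - snd q) \<in> F" "(1 - fst q, snd q) \<in> F"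
  shows "gsc_map N (dX q) ` F \<inter> gsc_map N (dXY q) ` F \<noteq> {}"
  using qcoords[OF q] by (intro pt_common[OF assms(2,3)]) (auto simp: dXY_def dX_def id1)

lemma noX:
  assumes q: "q \<in> corners" "q \<in> F" and EH: "\<forall>s. (s, snd q) \<in> F \<longrightarrow> (s, 1 - snd q) \<in> F \<longrightarrow> s = fst q"
    and z1: "(fst q, 1 - snd q) \<in> F" and z2: "(1 - fst q, 1 - snd q) \<in> F"
  shows "dX q \<notin> D"
proof
  assume dD: "dX q \<in> D"
  have qc: "(fst q = 0 \<or> fst q = 1)" "(snd q = 0 \<or> snd q = 1)" using qcoords[OF q(1)] by auto
  define s where "s = (real (inw (fst q)) + fst q) / real N"
  have p1: "gsc_map N (dX q) q = (s, snd q)"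
    using id2[OF qc(2)] Npos by (simp add: gsc_map_def dX_def s_def field_simps)
  have zc': "(fst q, 1 - snd q) \<in> corners" using qc unfolding corners_def by auto
  have c2: "cc (fst q, 1 - snd q) \<in> D" using cc_in[OF zc' z1] .
  have p2: "gsc_map N (cc (fst q, 1 - snd q)) (1 - fst q, 1 - snd q) = (s, 1 - snd q)"
    using id1[OF qc(1)] id3[OF qc(2)] Npos by (simp add: gsc_map_def cc_ccx s_def field_simps)
  have "(s, snd q) \<in> F" using p1 map_sub[OF dD] q(2) by (metis image_subset_iff)
  moreover have "(s, 1 - snd q) \<in> F" using p2 map_sub[OF c2] z2 by (metis image_subset_iff)
  ultimately have "s = fst q" using EH by blast
  hence "real (inw (fst q)) + fst q = real N * fst q" using Npos by (simp add: s_def field_simps)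
  thus False using id4[OF qc(1)] by simp
qed

lemma noY:
  assumes q: "q \<in> corners" "q \<in> F" and EV: "\<forall>s. (fst q, s) \<in> F \<longrightarrow> (1 - fst q, s) \<in> F \<longrightarrow> s = snd q"
    and z1: "(1 - fst q, snd q) \<in> F" and z2: "(1 - fst q, 1 - snd q) \<in> F"
  shows "dY q \<notin> D"
proof
  assume dD: "dY q \<in> D"
  have qc: "(fst q = 0 \<or> fst q = 1)" "(snd q = 0 \<or> snd q = 1)" using qcoords[OF q(1)] by auto
  define s where "s = (real (inw (snd q)) + snd q) / real N"
  have p1: "gsc_map N (dY q) q = (fst q, s)"
    using id2[OF qc(1)] Npos by (simp add: gsc_map_def dY_def s_def field_simps)
  have zc': "(1 - fst q, snd q) \<in> corners" using qc unfolding corners_def by auto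
  have c2: "cc (1 - fst q, snd q) \<in> D" using cc_in[OF zc' z1] .
  have p2: "gsc_map N (cc (1 - fst q, snd q)) (1 - fst q, 1 - snd q) = (1 - fst q, s)"
    using id1[OF qc(2)] id3[OF qc(1)] Npos by (simp add: gsc_map_def cc_ccx s_def field_simps)
  have "(fst q, s) \<in> F" using p1 map_sub[OF dD] q(2) by (metis image_subset_iff)
  moreover have "(1 - fst q, s) \<in> F" using p2 map_sub[OF c2] z2 by (metis image_subset_iff)
  ultimately have "s = snd q" using EV by blast
  hence "real (inw (snd q)) + snd q = real N * snd q" using Npos by (simp add: s_def field_simps)
  thus False using id4[OF qc(2)] by simp
qed

lemma other_corners:
  assumes "q \<in> corners" "z \<in> corners" "z \<noteq> q"
  shows "z = (1 - fst q, 1 - snd q) \<or> z = (1 - fst q, snd q) \<or> z = (fst q, 1 - snd q)"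
  using assms unfolding corners_def mem_Times_iff by (auto simp: prod_eq_iff)

lemma inw_ccx: "r = 0 \<or> r = 1 \<Longrightarrow> inw r \<noteq> ccx r"
  using N2 by (auto simp: inw_def ccx_def)

lemma cells_distinct: assumes "q \<in> corners" shows "dX q \<noteq> dXY q" "dY q \<noteq> dXY q" "dX q \<noteq> dY q"
proof -
  have h: "inw 0 \<noteq> ccx 0" "ccx 0 \<noteq> inw 0" "inw 1 \<noteq> ccx 1" "ccx 1 \<noteq> inw 1"
    using inw_ccx[of 0] inw_ccx[of 1] by auto
  show "dX q \<noteq> dXY q" "dY q \<noteq> dXY q" "dX q \<noteq> dY q"
    using h qcoords[OF assms] unfolding dX_def dY_def dXY_def by (auto simp: prod_eq_iff)
qed

lemma local_clique:
  assumes q: "q \<in> corners" "q \<in> F" and zs: "zs \<in> corners" "zs \<noteq> q" "zs \<notin> F"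
    and others: "\<And>z. z \<in> corners \<Longrightarrow> z \<noteq> zs \<Longrightarrow> z \<in> F"
    and EH: "zs = (1 - fst q, snd q) \<Longrightarrow> \<forall>s. (s, snd q) \<in> F \<longrightarrow> (s, 1 - snd q) \<in> F \<longrightarrow> s = fst q"
    and EV: "zs = (fst q, 1 - snd q) \<Longrightarrow> \<forall>s. (fst q, s) \<in> F \<longrightarrow> (1 - fst q, s) \<in> F \<longrightarrow> s = snd q"
    and d: "d1 \<in> D - {cc q}" "d2 \<in> D - {cc q}" "d1 \<noteq> d2"
    and i: "gsc_map N (cc q) ` F \<inter> gsc_map N d1 ` F \<noteq> {}" "gsc_map N (cc q) ` F \<inter> gsc_map N d2 ` F \<noteq> {}"
  shows "gsc_map N d1 ` F \<inter> gsc_map N d2 ` F \<noteq> {}"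
proof -
  have qc: "(fst q = 0 \<or> fst q = 1)" "(snd q = 0 \<or> snd q = 1)" using qcoords[OF q(1)] by auto
  have C: "(1 - fst q, 1 - snd q) \<in> corners" "(1 - fst q, snd q) \<in> corners" "(fst q, 1 - snd q) \<in> corners"
    using qc unfolding corners_def by auto
  have n1: "d1 = dX q \<or> d1 = dY q \<or> (d1 = dXY q \<and> (1 - fst q, 1 - snd q) \<in> F)" using nb_types[OF q(1) _ _ i(1)] d by blast
  have n2: "d2 = dX q \<or> d2 = dY q \<or> (d2 = dXY q \<and> (1 - fst q, 1 - snd q) \<in> F)" using nb_types[OF q(1) _ _ i(2)] d by blast
  have sym: "A \<inter> B \<noteq> {} \<Longrightarrow> B \<inter> A \<noteq> {}" for A B :: "(real\<times>real) set" by blast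
  consider (a) "zs = (1 - fst q, 1 - snd q)" | (b) "zs = (1 - fst q, snd q)" | (c) "zs = (fst q, 1 - snd q)"
    using other_corners[OF q(1) zs(1,2)] by blast
  thus ?thesis
  proof cases
    case a
    have f1: "(1 - fst q, snd q) \<in> F" "(fst q, 1 - snd q) \<in> F"
      using others C a qc by (auto simp: prod_eq_iff)
    have "d1 \<noteq> dXY q" "d2 \<noteq> dXY q" using n1 n2 zs(3) a cells_distinct[OF q(1)] by auto
    hence "(d1 = dX q \<and> d2 = dY q) \<or> (d1 = dY q \<and> d2 = dX q)" using n1 n2 d(3) by auto
    thus ?thesis using pair_XY[OF q(1) f1(2) f1(1)] sym by auto
  next
    case b
    have f1: "(1 - fst q, 1 - snd q) \<in> F" "(fst q, 1 - snd q) \<in> F"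
      using others C b qc by (auto simp: prod_eq_iff)
    have "dX q \<notin> D" using noX[OF q EH[OF b] f1(2) f1(1)] .
    hence "d1 \<noteq> dX q" "d2 \<noteq> dX q" using d by auto
    hence "(d1 = dY q \<and> d2 = dXY q) \<or> (d1 = dXY q \<and> d2 = dY q)" using n1 n2 d(3) by auto
    thus ?thesis using pair_YXY[OF q(1) f1(1) f1(2)] sym by auto
  next
    case c
    have f1: "(1 - fst q, 1 - snd q) \<in> F" "(1 - fst q, snd q) \<in> F"
      using others C c qc by (auto simp: prod_eq_iff)
    have "dY q \<notin> D" using noY[OF q EV[OF c] f1(2) f1(1)] .
    hence "d1 \<noteq> dY q" "d2 \<noteq> dY q" using d by auto
    hence "(d1 = dX q \<and> d2 = dXY q) \<or> (d1 = dXY q \<and> d2 = dX q)" using n1 n2 d(3) by auto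
    thus ?thesis using pair_XXY[OF q(1) f1(1) f1(2)] sym by auto
  qed
qed

end

lemma adj_sym: "adj a b \<Longrightarrow> adj b a" unfolding adj_def by auto

context gscx begin

lemma wmap_inj: assumes "gsc_word_map N w z = gsc_word_map N w z'" shows "z = z'"
proof -
  have Nk: "real N ^ length w > 0" using Npos by simp
  show ?thesis using assms word_map_formula[of N w z] word_map_formula[of N w z'] N2 Nk
    by (auto simp: prod_eq_iff divide_cancel_right)
qed

end

context fragx begin

lemma edge_h:
  assumes v: "v \<in> S k" and w: "w \<in> SY k" and k: "k \<ge> 1"
    and zv: "zc k v = q" and zw: "zc k w = (fst q, 1 - snd q)"
  shows "\<forall>s. (s, snd q) \<in> F \<longrightarrow> (s, 1 - snd q) \<in> F \<longrightarrow> s = fst q"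
proof (intro allI impI)
  fix s assume s1: "(s, snd q) \<in> F" and s2: "(s, 1 - snd q) \<in> F"
  have vV: "v \<in> Gamma_vertices D k" "p \<in> piece N F v" "hd v \<in> X" using v by (auto simp: S_def)
  have wV: "w \<in> Gamma_vertices D k" "p \<in> piece N F w" "hd w \<in> Y" using w by (auto simp: SY_def)
  have lv: "length v = k" "length w = k" using vV wV by (auto simp: Gamma_vertices_def)
  have km: "k = Suc (k-1)" using k by simp
  have eq: "gsc_word_map N v (s, snd q) = gsc_word_map N w (s, 1 - snd q)"
    using map_zc[OF lv(1)] map_zc[OF lv(2)] zv zw by simp
  have "gsc_word_map N v (s, snd q) \<in> piece N F v \<inter> piece N F w"
    using s1 s2 eq unfolding piece_def by (metis IntI image_eqI)
  moreover have "piece N F v \<inter> piece N F w \<subseteq> {p}" using cross[of v "k-1" w] vV wV km by simp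
  ultimately have "gsc_word_map N v (s, snd q) = p" by blast
  also have "p = gsc_word_map N v q" using zc_in[OF lv(1) vV(2)] zv by simp
  finally have "(s, snd q) = q" using wmap_inj by blast
  thus "s = fst q" by (simp add: prod_eq_iff)
qed

lemma edge_v:
  assumes v: "v \<in> S k" and w: "w \<in> SY k" and k: "k \<ge> 1"
    and zv: "zc k v = q" and zw: "zc k w = (1 - fst q, snd q)"
  shows "\<forall>s. (fst q, s) \<in> F \<longrightarrow> (1 - fst q, s) \<in> F \<longrightarrow> s = snd q"
proof (intro allI impI)
  fix s assume s1: "(fst q, s) \<in> F" and s2: "(1 - fst q, s) \<in> F"
  have vV: "v \<in> Gamma_vertices D k" "p \<in> piece N F v" "hd v \<in> X" using v by (auto simp: S_def)
  have wV: "w \<in> Gamma_vertices D k" "p \<in> piece N F w" "hd w \<in> Y" using w by (auto simp: SY_def)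
  have lv: "length v = k" "length w = k" using vV wV by (auto simp: Gamma_vertices_def)
  have km: "k = Suc (k-1)" using k by simp
  have eq: "gsc_word_map N v (fst q, s) = gsc_word_map N w (1 - fst q, s)"
    using map_zc[OF lv(1)] map_zc[OF lv(2)] zv zw by simp
  have "gsc_word_map N v (fst q, s) \<in> piece N F v \<inter> piece N F w"
    using s1 s2 eq unfolding piece_def by (metis IntI image_eqI)
  moreover have "piece N F v \<inter> piece N F w \<subseteq> {p}" using cross[of v "k-1" w] vV wV km by simp
  ultimately have "gsc_word_map N v (fst q, s) = p" by blast
  also have "p = gsc_word_map N v q" using zc_in[OF lv(1) vV(2)] zv by simp
  finally have "(fst q, s) = q" using wmap_inj by blast
  thus "s = snd q" by (simp add: prod_eq_iff)
qed


lemma find_q: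
  assumes X: "X = {a}" and vS: "v \<in> S k" and w1S: "w1 \<in> SY k" and k: "k \<ge> 1"
    and zs: "zs \<in> corners" "zs \<notin> F" and others: "\<And>z. z \<in> corners \<Longrightarrow> z \<noteq> zs \<Longrightarrow> z \<in> F"
  shows "\<exists>q. q \<in> corners \<and> q \<in> F \<and> p = gsc_map N a q"
proof -
  have vV0: "v \<in> Gamma_vertices D k" "p \<in> piece N F v" "hd v \<in> X" using vS by (auto simp: S_def)
  hence vV: "v \<in> Gamma_vertices D k" "p \<in> piece N F v" "hd v = a" using X by auto
  have wV: "w1 \<in> Gamma_vertices D k" "p \<in> piece N F w1" "hd w1 \<in> Y" using w1S by (auto simp: SY_def)
  define b where "b = hd w1"
  have bY: "b \<in> Y" using wV b_def by simp
  have aX: "a \<in> X" using X by simp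
  have ab: "a \<noteq> b" using aX bY XY(2) by blast
  have km: "k = Suc (k-1)" using k by simp
  obtain u where u: "v = a#u" "set u \<subseteq> D" using vV km by (cases v) (auto simp: Gamma_vertices_def)
  obtain u' where u': "w1 = b#u'" "set u' \<subseteq> D" using wV km b_def by (cases w1) (auto simp: Gamma_vertices_def)
  have aD: "a \<in> D" and bD: "b \<in> D" using aX bY XY by auto
  have "p \<in> gsc_map N a ` F" using vV(2) u piece_side[OF u(2) aD] by blast
  moreover have "p \<in> gsc_map N b ` F" using wV(2) u' piece_side[OF u'(2) bD] by blast
  ultimately obtain y y' where y: "y \<in> F" "p = gsc_map N a y" and y': "y' \<in> F" "p = gsc_map N b y'" by blast
  have e: "fst y + real (fst a) = fst y' + real (fst b)" "snd y + real (snd a) = snd y' + real (snd b)"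
    using map_eq_coords[of a y b y'] y y' by auto
  have bx: "0 \<le> fst y \<and> fst y \<le> 1 \<and> 0 \<le> snd y \<and> snd y \<le> 1" using Fbox y(1) by blast
  have bx': "0 \<le> fst y' \<and> fst y' \<le> 1 \<and> 0 \<le> snd y' \<and> snd y' \<le> 1" using Fbox y'(1) by blast
  have singab: "gsc_map N a ` F \<inter> gsc_map N b ` F \<subseteq> {p}" using sing X bY by blast
  have zc01: "(fst zs = 0 \<or> fst zs = 1) \<and> (snd zs = 0 \<or> snd zs = 1)" using corner_cases[OF zs(1)] .
  consider (xy) "fst a \<noteq> fst b" "snd a \<noteq> snd b" | (x) "fst a \<noteq> fst b" "snd a = snd b"
    | (y) "fst a = fst b" "snd a \<noteq> snd b" using ab by (auto simp: prod_eq_iff)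
  thus ?thesis
  proof cases
    case xy
    have "fst y = 0 \<or> fst y = 1" using coord1[OF e(1)] bx bx' xy by blast
    moreover have "snd y = 0 \<or> snd y = 1" using coord1[OF e(2)] bx bx' xy by blast
    ultimately have "y \<in> corners" unfolding corners_def mem_Times_iff by auto
    thus ?thesis using y by blast
  next
    case x
    have c1: "(fst y = 1 \<and> fst y' = 0) \<or> (fst y = 0 \<and> fst y' = 1)" using coord1[OF e(1)] bx bx' x by blast
    define s where "s = 1 - snd zs"
    have s01: "s = 0 \<or> s = 1" using zc01 s_def by auto
    have C1: "(fst y, s) \<in> corners" "(1 - fst y, s) \<in> corners" using c1 s01 unfolding corners_def by auto
    have "(fst y, s) \<noteq> zs" "(1 - fst y, s) \<noteq> zs" using s_def zc01 by (auto simp: prod_eq_iff)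
    hence F1: "(fst y, s) \<in> F" "(1 - fst y, s) \<in> F" using others C1 by auto
    have "fst (fst y, s) + real (fst a) = fst (1 - fst y, s) + real (fst b)" using e(1) c1 by auto
    moreover have "snd (fst y, s) + real (snd a) = snd (1 - fst y, s) + real (snd b)" using x by simp
    ultimately have "gsc_map N a (fst y, s) = gsc_map N b (1 - fst y, s)" by (simp add: gsc_map_def)
    hence "gsc_map N a (fst y, s) \<in> gsc_map N a ` F \<inter> gsc_map N b ` F" using F1 by (metis IntI image_eqI)
    hence "p = gsc_map N a (fst y, s)" using singab by blast
    thus ?thesis using C1(1) F1(1) by blast
  next
    case y
    have c1: "(snd y = 1 \<and> snd y' = 0) \<or> (snd y = 0 \<and> snd y' = 1)" using coord1[OF e(2)] bx bx' y by blast
    define s where "s = 1 - fst zs"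
    have s01: "s = 0 \<or> s = 1" using zc01 s_def by auto
    have C1: "(s, snd y) \<in> corners" "(s, 1 - snd y) \<in> corners" using c1 s01 unfolding corners_def by auto
    have "(s, snd y) \<noteq> zs" "(s, 1 - snd y) \<noteq> zs" using s_def zc01 by (auto simp: prod_eq_iff)
    hence F1: "(s, snd y) \<in> F" "(s, 1 - snd y) \<in> F" using others C1 by auto
    have "snd (s, snd y) + real (snd a) = snd (s, 1 - snd y) + real (snd b)" using e(2) c1 by auto
    moreover have "fst (s, snd y) + real (fst a) = fst (s, 1 - snd y) + real (fst b)" using y by simp
    ultimately have "gsc_map N a (s, snd y) = gsc_map N b (s, 1 - snd y)" by (simp add: gsc_map_def)
    hence "gsc_map N a (s, snd y) \<in> gsc_map N a ` F \<inter> gsc_map N b ` F" using F1 by (metis IntI image_eqI)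
    hence "p = gsc_map N a (s, snd y)" using singab by blast
    thus ?thesis using C1(1) F1(1) by blast
  qed
qed


lemma hard_case:
  assumes k: "k \<ge> 2" and X: "X = {a}" and Sv: "S k = {v}"
    and w: "w1 \<in> SY k" "w2 \<in> SY k" "w1 \<noteq> w2"
  shows "\<exists>q. q \<in> corners \<and> q \<in> F \<and> p = gsc_map N a q \<and> connected (Hs q)"
proof -
  have vS: "v \<in> S k" using Sv by simp
  have vV: "v \<in> Gamma_vertices D k" "p \<in> piece N F v" "hd v \<in> X" using vS by (auto simp: S_def)
  have w1V: "w1 \<in> Gamma_vertices D k" "p \<in> piece N F w1" "hd w1 \<in> Y" using w(1) by (auto simp: SY_def)
  have w2V: "w2 \<in> Gamma_vertices D k" "p \<in> piece N F w2" "hd w2 \<in> Y" using w(2) by (auto simp: SY_def)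
  have dv: "v \<noteq> w1" "v \<noteq> w2" using vV(3) w1V(3) w2V(3) XY(2) by auto
  have km: "k = Suc (k-1)" using k by simp
  have len: "length v = k" "length w1 = k" "length w2 = k" using vV w1V w2V by (auto simp: Gamma_vertices_def)
  have ti: "(\<exists>n::nat. real N ^ k * fst p = real n) \<and> (\<exists>n::nat. real N ^ k * snd p = real n)"
    using t_int[OF vV(1) w1V(1) w2V(1) vV(2) w1V(2) w2V(2) dv w(3)] .
  have C: "zc k v \<in> corners" "zc k w1 \<in> corners" "zc k w2 \<in> corners"
    using zc_corner[OF _ _ ti] vV w1V w2V by auto
  have inF: "zc k v \<in> F" "zc k w1 \<in> F" "zc k w2 \<in> F"
    using zc_in[OF len(1) vV(2)] zc_in[OF len(2) w1V(2)] zc_in[OF len(3) w2V(2)] by auto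
  have zd: "zc k v \<noteq> zc k w1" "zc k v \<noteq> zc k w2" "zc k w1 \<noteq> zc k w2"
    using zc_inj vV(1) w1V(1) w2V(1) dv w(3) by metis+
  obtain zs where zs: "zs \<in> corners" "zs \<notin> {zc k v, zc k w1, zc k w2}"
  proof -
    have "card {zc k v, zc k w1, zc k w2} \<le> 3" by (simp add: card_insert_le_m1)
    moreover have "card corners = 4" unfolding corners_def by simp
    moreover have "corners \<subseteq> {zc k v, zc k w1, zc k w2} \<Longrightarrow> card corners \<le> card {zc k v, zc k w1, zc k w2}"
      by (intro card_mono) auto
    ultimately have "\<not> corners \<subseteq> {zc k v, zc k w1, zc k w2}" by linarith
    thus ?thesis using that by blast
  qed
  have zsd: "zs \<noteq> zc k v" "zs \<noteq> zc k w1" "zs \<noteq> zc k w2" using zs(2) by auto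
  have cover: "corners = {zc k v, zc k w1, zc k w2, zs}"
    by (rule corners_all[OF C zs(1) zd(1) zd(2) _ zd(3)]) (use zsd in auto)
  have crs1: "piece N F v \<inter> piece N F w1 \<subseteq> {p}" using cross[of v "k-1" w1] vV w1V km by simp
  have crs2: "piece N F v \<inter> piece N F w2 \<subseteq> {p}" using cross[of v "k-1" w2] vV w2V km by simp
  have zsF: "zs \<notin> F"
  proof
    assume "zs \<in> F"
    hence "{zc k v, zc k w1, zc k w2, zs} \<subseteq> F" using inF by simp
    hence all: "corners \<subseteq> F" using cover by simp
    have "adj (zc k v) (zc k w1) \<or> adj (zc k v) (zc k w2)"
      using corners_adj[OF C(2) C(3) C(1) zd(3)] zd by metis
    thus False
    proof
      assume "adj (zc k v) (zc k w1)"
      thus False using adj_contra[OF len(1,2) vV(2) w1V(2) crs1 C(1,2) adj_sym all] by blast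
    next
      assume "adj (zc k v) (zc k w2)"
      thus False using adj_contra[OF len(1,3) vV(2) w2V(2) crs2 C(1,3) adj_sym all] by blast
    qed
  qed
  have others: "z \<in> F" if "z \<in> corners" "z \<noteq> zs" for z
  proof -
    have "z \<in> {zc k v, zc k w1, zc k w2, zs}" using that(1) cover by simp
    thus ?thesis using that(2) inF by auto
  qed
  obtain q where q: "q \<in> corners" "q \<in> F" "p = gsc_map N a q"
    using find_q[OF X vS w(1) _ zs(1) zsF others] k by auto
  have aD: "a \<in> D" using X XY by blast
  have cD: "cc q \<in> D" using cc_in q by blast
  have "a # replicate (k-1) (cc q) \<in> Gamma_vertices D k"
    using aD cD by (subst km) (auto simp: Gamma_vertices_def)
  moreover have pin: "p \<in> piece N F (a # replicate (k-1) (cc q))"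
    using rep_piece[OF q(1,2), of "k-1"] q(3) by (simp add: piece_Cons)
  ultimately have "a # replicate (k-1) (cc q) \<in> S k" unfolding S_def using X by simp
  hence veq: "v = a # replicate (k-1) (cc q)" using Sv by simp
  have "gsc_word_map N v q = p" using veq q(3) rep_fix[OF q(1)] by (simp add: word_map_Cons)
  moreover have "gsc_word_map N v (zc k v) = p" using zc_in[OF len(1) vV(2)] by simp
  ultimately have zvq: "zc k v = q" using wmap_inj by metis
  have qc: "(fst q = 0 \<or> fst q = 1)" "(snd q = 0 \<or> snd q = 1)" using corner_cases[OF q(1)] by auto
  have zsq: "zs \<noteq> q" using zsF q(2) by auto
  have EH: "\<forall>s. (s, snd q) \<in> F \<longrightarrow> (s, 1 - snd q) \<in> F \<longrightarrow> s = fst q" if h: "zs = (1 - fst q, snd q)"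
  proof -
    have zc': "(fst q, 1 - snd q) \<in> corners" using qc unfolding corners_def by auto
    have "(fst q, 1 - snd q) \<noteq> zs" using h qc by (auto simp: prod_eq_iff)
    moreover have "(fst q, 1 - snd q) \<noteq> zc k v" using zvq qc by (auto simp: prod_eq_iff)
    ultimately have "(fst q, 1 - snd q) = zc k w1 \<or> (fst q, 1 - snd q) = zc k w2" using zc' cover by blast
    thus ?thesis using edge_h[OF vS w(1) _ zvq] edge_h[OF vS w(2) _ zvq] k by force
  qed
  have EV: "\<forall>s. (fst q, s) \<in> F \<longrightarrow> (1 - fst q, s) \<in> F \<longrightarrow> s = snd q" if h: "zs = (fst q, 1 - snd q)"
  proof -
    have zc': "(1 - fst q, snd q) \<in> corners" using qc unfolding corners_def by auto
    have "(1 - fst q, snd q) \<noteq> zs" using h qc by (auto simp: prod_eq_iff)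
    moreover have "(1 - fst q, snd q) \<noteq> zc k v" using zvq qc by (auto simp: prod_eq_iff)
    ultimately have "(1 - fst q, snd q) = zc k w1 \<or> (1 - fst q, snd q) = zc k w2" using zc' cover by blast
    thus ?thesis using edge_v[OF vS w(1) _ zvq] edge_v[OF vS w(2) _ zvq] k by force
  qed
  have "connected (Hs q)"
  proof (rule Hs_conn_clique[OF cD])
    fix d1 d2 assume "d1 \<in> D - {cc q}" "d2 \<in> D - {cc q}" "d1 \<noteq> d2"
      "gsc_map N (cc q) ` F \<inter> gsc_map N d1 ` F \<noteq> {}" "gsc_map N (cc q) ` F \<inter> gsc_map N d2 ` F \<noteq> {}"
    thus "gsc_map N d1 ` F \<inter> gsc_map N d2 ` F \<noteq> {}"
      using local_clique[OF q(1,2) zs(1) zsq zsF others EH EV] by blast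
  qed
  thus ?thesis using q by blast
qed

end

context fragx begin

lemma SY_swap: "fragx.SY N D F X p = S"
  by (simp add: fragx.SY_def[OF swap] S_def fun_eq_iff)

lemma corner_good:
  assumes k: "k \<ge> 2" and Sv: "S k = {v}" and X: "X = {a}" and q: "q \<in> corners" "q \<in> F"
    and pq: "p = gsc_map N a q" and Hc: "connected (Hs q)"
  shows "card D ^ (k-1) - 1 \<le> chi (Gamma_vertices D k) (Gamma_edge N F)"
proof -
  have aD: "a \<in> D" using X XY by blast
  have cD: "cc q \<in> D" using cc_in q by blast
  have kk: "k = Suc (k-1)" using k by simp
  have "a # replicate (k-1) (cc q) \<in> Gamma_vertices D k"
    using aD cD by (subst kk) (auto simp: Gamma_vertices_def)
  moreover have "p \<in> piece N F (a # replicate (k-1) (cc q))"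
    using rep_piece[OF q, of "k-1"] pq by (simp add: piece_Cons)
  ultimately have "a # replicate (k-1) (cc q) \<in> S k" unfolding S_def using X by simp
  hence v: "v = a # replicate (k-1) (cc q)" using Sv by simp
  show ?thesis
  proof (rule good[OF k Sv])
    show "card X \<ge> 2 \<or> (\<forall>x\<in>(\<lambda>u. hd v#u) ` Gamma_vertices D (k-1) - {v}.
                \<forall>y\<in>(\<lambda>u. hd v#u) ` Gamma_vertices D (k-1) - {v}.
                graph_reach ((\<lambda>u. hd v#u) ` Gamma_vertices D (k-1) - {v}) (Gamma_edge N F) x y)"
      using block_minus_conn[OF q Hc k, of a] v by simp
  qed
qed

lemma caseA:
  assumes k: "k \<ge> 2" and Sv: "S k = {v}"
  shows "card D ^ (k-1) - 1 \<le> chi (Gamma_vertices D k) (Gamma_edge N F)"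
proof (cases "card X \<ge> 2")
  case True thus ?thesis using good[OF k Sv] by blast
next
  case False
  have finX: "finite X" using XY finD by (metis finite_Un)
  have "card X \<noteq> 0" using finX XY(3) by simp
  hence "card X = 1" using False by simp
  then obtain a where X: "X = {a}" using card_1_singletonE by blast
  have km: "k = Suc (k-1)" using k by simp
  have SYne: "SY k \<noteq> {}" using fragx.S_ne[OF swap, of "k-1"] S_swap km by simp
  show ?thesis
  proof (cases "\<exists>w1 w2. w1 \<in> SY k \<and> w2 \<in> SY k \<and> w1 \<noteq> w2")
    case True
    then obtain w1 w2 where "w1 \<in> SY k" "w2 \<in> SY k" "w1 \<noteq> w2" by blast
    then obtain q where "q \<in> corners" "q \<in> F" "p = gsc_map N a q" "connected (Hs q)"
      using hard_case[OF k X Sv] by blast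
    thus ?thesis using corner_good[OF k Sv X] by blast
  next
    case False
    then obtain w where Sw: "SY k = {w}" using SYne by blast
    show ?thesis
    proof (cases "card Y \<ge> 2")
      case True
      have "fragx.S N D F Y p k = {w}" using Sw S_swap by simp
      thus ?thesis using fragx.good[OF swap k] True by blast
    next
      case False
      have finY: "finite Y" using XY finD by (metis finite_Un)
      have "card Y \<noteq> 0" using finY XY(4) by simp
      hence "card Y = 1" using False by simp
      then obtain b where Y: "Y = {b}" using card_1_singletonE by blast
      obtain q where "q \<in> corners" "q \<in> F" "p = gsc_map N a q" "connected (Hs q)"
        using two_case[OF X Y] by blast
      thus ?thesis using corner_good[OF k Sv X] by blast
    qed
  qed
qed

lemma main_bound:
  assumes k: "k \<ge> 2"
  shows "card D ^ (k-1) - 1 \<le> chi (Gamma_vertices D k) (Gamma_edge N F)"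
proof -
  have km: "k = Suc (k-1)" using k by simp
  have Sne: "S k \<noteq> {}" using S_ne[of "k-1"] km by simp
  have SYne: "SY k \<noteq> {}" using fragx.S_ne[OF swap, of "k-1"] S_swap km by simp
  show ?thesis
  proof (cases "\<exists>w1 w2. w1 \<in> S k \<and> w2 \<in> S k \<and> w1 \<noteq> w2")
    case False
    then obtain v where "S k = {v}" using Sne by blast
    thus ?thesis using caseA[OF k] by blast
  next
    case True
    then obtain w1 w2 where w: "w1 \<in> S k" "w2 \<in> S k" "w1 \<noteq> w2" by blast
    have "\<not> (\<exists>w3 w4. w3 \<in> SY k \<and> w4 \<in> SY k \<and> w3 \<noteq> w4)"
      using two_two[of w1 "k-1" w2] w km by metis
    then obtain v where "SY k = {v}" using SYne by blast
    hence "fragx.S N D F Y p k = {v}" using S_swap by simp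
    thus ?thesis using fragx.caseA[OF swap k] by blast
  qed
qed

end

theorem mainTheorem10:
  fixes N :: nat and D :: "(nat \<times> nat) set" and F :: "(real \<times> real) set" and k :: nat
  assumes "gsc_params N D"
    and "gsc_attractor N D F"
    and "connected F"
    and "fragile N D F"
    and "k \<ge> 2"
  shows "int (chi (Gamma_vertices D k) (Gamma_edge N F)) \<ge> int (card D) ^ (k - 1) - 1"
proof -
  interpret gscx N D F using assms(1-3) by unfold_locales
  obtain D1 D2 p where fr: "D1 \<union> D2 = D" "D1 \<inter> D2 = {}" "D1 \<noteq> {}" "D2 \<noteq> {}"
    "(\<Union>i\<in>D1. gsc_map N i ` F) \<inter> (\<Union>i\<in>D2. gsc_map N i ` F) = {p}"
    using assms(4) unfolding fragile_def by blast
  interpret fragx N D F D1 D2 p using fr by unfold_locales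
  have b: "card D ^ (k-1) - 1 \<le> chi (Gamma_vertices D k) (Gamma_edge N F)" using main_bound[OF assms(5)] .
  have "card D ^ (k-1) \<ge> 1" using cardD by simp
  hence "int (card D ^ (k-1) - 1) = int (card D) ^ (k-1) - 1" by (simp add: of_nat_diff)
  thus ?thesis using b by linarith
qed


end
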